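(* Let $K\geq 2$ be an integer, let $\mathcal{X}_1,\dots,\mathcal{X}_K$ be Euclidean (finite-dimensional real inner product) spaces with inner products $\langle\cdot,\cdot\rangle_k$ and norms $\Vert\cdot\Vert_k$, and let $X_1,\dots,X_K$ be random variables on a probability space $(\Omega,\mathcal{A},P)$ with $X_k$ valued in $\mathcal{X}_k$, $\mathbb{E}(\Vert X_k\Vert_k^2)<+\infty$ and $\mathbb{E}(X_k)=0$ for every $k$. For $(k,\ell)\in\{1,\dots,K\}^2$ let $V_{k\ell}=\mathbb{E}(X_\ell\otimes X_k)$ and $V_k=V_{kk}$, and assume each $V_k$ is invertible. Let $\mathcal{X}=\mathcal{X}_1\times\cdots\times\mathcal{X}_K$ with inner product $\langle\alpha,\beta\rangle_{\mathcal{X}}=\sum_{k=1}^K\langle\alpha_k,\beta_k\rangle_k$, let $q=\dim\mathcal{X}$, and define the operators on $\mathcal{X}$ \[ \Phi=\sum_{k=1}^K\tau_k^\ast V_k\tau_k,\qquad \Psi=\sum_{k=1}^K\sum_{\ell=1,\ \ell\neq k}^K\tau_k^\ast V_{k\ell}\tau_\ell,\qquad T=\Phi^{-1/2}\Psi\Phi^{-1/2}. \] Let $\rho_1\geq\rho_2\geq\cdots\geq\rho_q$ be the eigenvalues of the self-adjoint operator $T$ (counted with multiplicity). Then: (i) for every $j\in\{1,\dots,q\}$, $-1\leq\rho_j\leq K(K-1)$; (ii) $\rho_j=0$ for all $j\in\{1,\dots,q\}$ if and only if $V_{k\ell}=0$ for all $(k,\ell)\in\{1,\dots,K\}^2$ with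 $k\neq\ell$.
   Context: For vectors $x,y$ in Euclidean spaces, $x\otimes y$ denotes the linear map $h\mapsto\langle x,h\rangle y$, so $V_{k\ell}=\mathbb{E}(X_\ell\otimes X_k)$ is a linear map from $\mathcal{X}_\ell$ to $\mathcal{X}_k$ with $\langle a,V_{k\ell}b\rangle_k=\mathbb{E}(\langle a,X_k\rangle_k\langle b,X_\ell\rangle_\ell)$. $\tau_k:\mathcal{X}\to\mathcal{X}_k$ is the canonical projection $\alpha\mapsto\alpha_k$, and its adjoint $\tau_k^\ast:\mathcal{X}_k\to\mathcal{X}$ maps $t$ to the element of $\mathcal{X}$ whose $k$-th component is $t$ and all other components are $0$. $\Phi$ is self-adjoint, positive and invertible, and $\Phi^{-1/2}=\sum_k\tau_k^\ast V_k^{-1/2}\tau_k$. The $\rho_j$ are called the canonical coefficients of the multiple-set linear canonical analysis of $(X_1,\dots,X_K)$. *)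

theory Defs
  imports "HOL-Probability.Probability" "Jordan_Normal_Form.Matrix" "Jordan_Normal_Form.Char_Poly"
begin

text \<open>Each Euclidean space X_k is identified (via an orthonormal basis) with R^(d k)
  carrying the standard inner product; indices k range over {1..K}.\<close>

definition msum :: "nat \<Rightarrow> nat \<Rightarrow> ('i \<Rightarrow> real mat) \<Rightarrow> 'i set \<Rightarrow> real mat" where
  "msum n m F I = mat n m (\<lambda>(i,j). \<Sum>k\<in>I. F k $$ (i,j))"

definition blk_offset :: "(nat \<Rightarrow> nat) \<Rightarrow> nat \<Rightarrow> nat" where
  "blk_offset d k = (\<Sum>m\<in>{1..<k}. d m)"

definition qdim :: "(nat \<Rightarrow> nat) \<Rightarrow> nat \<Rightarrow> nat" where
  "qdim d K = (\<Sum>k\<in>{1..K}. d k)"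

definition tau :: "(nat \<Rightarrow> nat) \<Rightarrow> nat \<Rightarrow> nat \<Rightarrow> real mat" where
  "tau d K k = mat (d k) (qdim d K) (\<lambda>(i,p). if p = blk_offset d k + i then 1 else 0)"

text \<open>cross-covariance V_{kl} = E(X_l \<otimes> X_k), a (d k) x (d l) matrix:
  entry (i,j) is E(X_k,i X_l,j)\<close>
definition covop :: "'a measure \<Rightarrow> (nat \<Rightarrow> 'a \<Rightarrow> nat \<Rightarrow> real) \<Rightarrow> (nat \<Rightarrow> nat) \<Rightarrow> nat \<Rightarrow> nat \<Rightarrow> real mat" where
  "covop M X d k l = mat (d k) (d l) (\<lambda>(i,j). prob_space.expectation M (\<lambda>\<omega>. X k \<omega> i * X l \<omega> j))"

definition Phi_op where
  "Phi_op M X d K = msum (qdim d K) (qdim d K)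
     (\<lambda>k. transpose_mat (tau d K k) * covop M X d k k * tau d K k) {1..K}"

definition Psi_op where
  "Psi_op M X d K = msum (qdim d K) (qdim d K)
     (\<lambda>k. msum (qdim d K) (qdim d K)
        (\<lambda>l. transpose_mat (tau d K k) * covop M X d k l * tau d K l) ({1..K} - {k})) {1..K}"

definition pd_mat :: "nat \<Rightarrow> real mat \<Rightarrow> bool" where
  "pd_mat n S \<longleftrightarrow> S \<in> carrier_mat n n \<and> transpose_mat S = S \<and>
     (\<forall>v\<in>carrier_vec n. v \<noteq> 0\<^sub>v n \<longrightarrow> v \<bullet> (S *\<^sub>v v) > 0)"

definition inv_sqrt_mat :: "nat \<Rightarrow> real mat \<Rightarrow> real mat" where
  "inv_sqrt_mat n A = (THE S. pd_mat n S \<and> S * S * A = 1\<^sub>m n)"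

definition T_op where
  "T_op M X d K = inv_sqrt_mat (qdim d K) (Phi_op M X d K) * Psi_op M X d K
                  * inv_sqrt_mat (qdim d K) (Phi_op M X d K)"

end

theory Submission
  imports Defs "Jordan_Normal_Form.Spectral_Radius"
begin

lemma real_sym_eigen:
  fixes A :: "real mat"
  assumes A: "A \<in> carrier_mat n n" and sym: "A\<^sup>T = A" and n: "n > 0"
  shows "\<exists>l v. v \<in> carrier_vec n \<and> v \<noteq> 0\<^sub>v n \<and> A *\<^sub>v v = l \<cdot>\<^sub>v v"
proof -
  define Ac where "Ac = map_mat complex_of_real A"
  have Ac: "Ac \<in> carrier_mat n n" using A unfolding Ac_def by auto
  from spectrum_non_empty[OF Ac n] obtain mu where "eigenvalue Ac mu"
    unfolding spectrum_def by auto
  then obtain v where v: "v \<in> carrier_vec n" "v \<noteq> 0\<^sub>v n" "Ac *\<^sub>v v = mu \<cdot>\<^sub>v v"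
    unfolding eigenvalue_def eigenvector_def using Ac by auto
  have symA: "\<And>i j. i < n \<Longrightarrow> j < n \<Longrightarrow> A $$ (i,j) = A $$ (j,i)"
    using sym A by (metis carrier_matD index_transpose_mat(1))
  have eq: "(\<Sum>j<n. complex_of_real (A $$ (i,j)) * v $ j) = mu * v $ i" if "i < n" for i
  proof -
    have h: "(Ac *\<^sub>v v) $ i = (mu \<cdot>\<^sub>v v) $ i" by (simp only: v(3))
    have "row Ac i \<bullet> v = mu * v $ i" using h that v(1) Ac by simp
    then show ?thesis using that v(1) Ac A unfolding Ac_def
      by (simp add: scalar_prod_def lessThan_atLeast0)
  qed
  define a where "a = (\<lambda>j. Re (v $ j))"
  define b where "b = (\<lambda>j. Im (v $ j))"
  define r where "r = Re mu"
  define s where "s = Im mu"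
  have eqa: "(\<Sum>j<n. A $$ (i,j) * a j) = r * a i - s * b i" if "i < n" for i
  proof -
    have "Re (\<Sum>j<n. complex_of_real (A $$ (i,j)) * v $ j) = Re (mu * v $ i)" using eq[OF that] by simp
    then show ?thesis unfolding a_def b_def r_def s_def by (simp add: Re_sum)
  qed
  have eqb: "(\<Sum>j<n. A $$ (i,j) * b j) = r * b i + s * a i" if "i < n" for i
  proof -
    have "Im (\<Sum>j<n. complex_of_real (A $$ (i,j)) * v $ j) = Im (mu * v $ i)" using eq[OF that] by simp
    then show ?thesis unfolding a_def b_def r_def s_def by (simp add: Im_sum algebra_simps)
  qed
  have "(\<Sum>i<n. b i * (\<Sum>j<n. A $$ (i,j) * a j)) = (\<Sum>i<n. \<Sum>j<n. b i * A $$ (i,j) * a j)"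
    by (simp add: sum_distrib_left mult.assoc)
  also have "\<dots> = (\<Sum>j<n. \<Sum>i<n. b i * A $$ (i,j) * a j)" by (rule sum.swap)
  also have "\<dots> = (\<Sum>j<n. a j * (\<Sum>i<n. A $$ (j,i) * b i))"
    by (simp add: sum_distrib_left symA mult.commute mult.left_commute)
  finally have "(\<Sum>i<n. b i * (r * a i - s * b i)) = (\<Sum>j<n. a j * (r * b j + s * a j))"
    using eqa eqb by simp
  hence "s * ((\<Sum>i<n. (a i)^2) + (\<Sum>i<n. (b i)^2)) = 0"
    by (simp add: algebra_simps sum.distrib sum_subtractf sum_distrib_left power2_eq_square)
  moreover have "(\<Sum>i<n. (a i)^2) + (\<Sum>i<n. (b i)^2) > 0"
  proof -
    obtain i where i: "i < n" "v $ i \<noteq> 0" using v by (metis eq_vecI carrier_vecD index_zero_vec)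
    hence "a i \<noteq> 0 \<or> b i \<noteq> 0" unfolding a_def b_def using complex_eq_iff by auto
    hence "(a i)^2 + (b i)^2 > 0" by (simp add: sum_power2_gt_zero_iff)
    also have "(a i)^2 + (b i)^2 \<le> (\<Sum>i<n. (a i)^2) + (\<Sum>i<n. (b i)^2)"
      by (intro add_mono member_le_sum) (use i in auto)
    finally show ?thesis .
  qed
  ultimately have s0: "s = 0" by simp
  show ?thesis
  proof (cases "\<exists>i<n. a i \<noteq> 0")
    case True
    define w where "w = vec n a"
    have "w \<in> carrier_vec n" "w \<noteq> 0\<^sub>v n" using True unfolding w_def by (auto, metis index_vec index_zero_vec(1))
    moreover have "A *\<^sub>v w = r \<cdot>\<^sub>v w"
      using A eqa s0 unfolding w_def
      by (intro eq_vecI) (auto simp: scalar_prod_def lessThan_atLeast0)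
    ultimately show ?thesis by blast
  next
    case False
    then have "\<exists>i<n. b i \<noteq> 0"
      using v unfolding a_def b_def by (metis complex_eq_iff eq_vecI carrier_vecD index_zero_vec zero_complex.simps)
    define w where "w = vec n b"
    have "w \<in> carrier_vec n" "w \<noteq> 0\<^sub>v n" using \<open>\<exists>i<n. b i \<noteq> 0\<close> unfolding w_def by (auto, metis index_vec index_zero_vec(1))
    moreover have "A *\<^sub>v w = r \<cdot>\<^sub>v w"
      using A eqb s0 unfolding w_def
      by (intro eq_vecI) (auto simp: scalar_prod_def lessThan_atLeast0)
    ultimately show ?thesis by blast
  qed
qed

lemma householder:
  fixes v :: "real vec"
  assumes v: "v \<in> carrier_vec m" and vv: "v \<bullet> v = 1" and m: "0 < m"
  shows "\<exists>H. H \<in> carrier_mat m m \<and> H\<^sup>T = H \<and> H * H = 1\<^sub>m m \<and> (\<forall>i<m. H $$ (i,0) = v $ i)"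
proof (cases "v $ 0 = 1")
  case True
  have vv': "(\<Sum>i<m. (v $ i)^2) = 1" using vv v by (simp add: scalar_prod_def lessThan_atLeast0 power2_eq_square)
  have "(\<Sum>i<m. (v $ i)^2) = (v $ 0)^2 + (\<Sum>i\<in>{..<m}-{0}. (v $ i)^2)"
    using m by (simp add: sum.remove)
  hence "(\<Sum>i\<in>{..<m}-{0}. (v $ i)^2) = 0" using vv' True by simp
  hence z: "\<forall>i\<in>{..<m}-{0}. (v $ i)^2 = 0" by (subst (asm) sum_nonneg_eq_0_iff) auto
  show ?thesis
    by (rule exI[of _ "1\<^sub>m m"]) (use z True in auto)
next
  case False
  define u where "u = (\<lambda>i. v $ i - (if i = 0 then 1 else 0))"
  define c where "c = 1 / (1 - v $ 0)"
  define H where "H = mat m m (\<lambda>(i,j). (if i = j then 1 else 0) - c * u i * u j)"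
  have vv': "(\<Sum>i<m. (v $ i)^2) = 1" using vv v by (simp add: scalar_prod_def lessThan_atLeast0 power2_eq_square)
  have su: "(\<Sum>k<m. (u k)^2) = 2 * (1 - v $ 0)"
  proof -
    have "(\<Sum>k<m. (u k)^2) = (\<Sum>k<m. (v $ k)^2 - 2 * (if k = 0 then v $ k else 0) + (if k = 0 then 1 else 0))"
      unfolding u_def by (intro sum.cong) (auto simp: power2_eq_square algebra_simps)
    also have "\<dots> = 1 - 2 * v $ 0 + 1" using m
      by (simp add: sum.distrib sum_subtractf vv' sum.delta sum_distrib_left[symmetric])
    finally show ?thesis by simp
  qed
  have c1: "c * (2 * (1 - v $ 0)) = 2" using False unfolding c_def by (simp add: field_simps)
  have Hc: "H \<in> carrier_mat m m" unfolding H_def by simp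
  have HT: "H\<^sup>T = H" unfolding H_def by (intro eq_matI) auto
  have HH: "H * H = 1\<^sub>m m"
  proof (intro eq_matI)
    fix i j assume ij: "i < dim_row (1\<^sub>m m)" "j < dim_col (1\<^sub>m m)"
    hence ij: "i < m" "j < m" by auto
    have "(H * H) $$ (i,j) = (\<Sum>k<m. ((if i = k then 1 else 0) - c * u i * u k) * ((if k = j then 1 else 0) - c * u k * u j))"
      using ij unfolding H_def by (simp add: scalar_prod_def lessThan_atLeast0)
    also have "\<dots> = (\<Sum>k<m. (if k = i then (if i = j then 1 else 0) else 0)
         - (if i = k then c * u k * u j else 0) - (if k = j then c * u i * u k else 0)
         + c * c * u i * u j * (u k)^2)"
      apply (intro sum.cong refl)
      subgoal for k by (cases "k = i"; cases "k = j"; simp add: algebra_simps power2_eq_square)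
      done
    also have "\<dots> = (if i = j then 1 else 0) - c * u i * u j - c * u i * u j + c * c * u i * u j * (\<Sum>k<m. (u k)^2)"
      using ij by (simp add: sum.distrib sum_subtractf sum_distrib_left[symmetric] sum.delta sum.delta')
    also have "\<dots> = (if i = j then 1 else 0)"
    proof -
      have "c * c * u i * u j * (\<Sum>k<m. (u k)^2) = (c * (2 * (1 - v $ 0))) * (c * u i * u j)" unfolding su by simp
      also have "\<dots> = 2 * (c * u i * u j)" using c1 by simp
      finally show ?thesis by simp
    qed
    finally show "(H * H) $$ (i,j) = 1\<^sub>m m $$ (i,j)" using ij by simp
  qed (use Hc in auto)
  have col: "H $$ (i,0) = v $ i" if "i < m" for i
  proof -
    have "H $$ (i,0) = (if i = 0 then 1 else 0) - c * u i * (v $ 0 - 1)"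
      using that m unfolding H_def u_def by simp
    also have "\<dots> = v $ i" using False unfolding c_def u_def by (simp add: field_simps)
    finally show ?thesis .
  qed
  show ?thesis using Hc HT HH col by blast
qed

lemma vv_nonneg: fixes v :: "real vec" shows "v \<bullet> v \<ge> 0"
  unfolding scalar_prod_def by (intro sum_nonneg) auto

lemma vv_pos: fixes v :: "real vec"
  assumes "v \<in> carrier_vec n" "v \<noteq> 0\<^sub>v n" shows "v \<bullet> v > 0"
proof -
  obtain i where i: "i < n" "v $ i \<noteq> 0" using assms by (metis eq_vecI carrier_vecD index_zero_vec)
  have "0 < v $ i * v $ i" using i(2) not_real_square_gt_zero by blast
  also have "\<dots> \<le> (\<Sum>j\<in>{0..<n}. v $ j * v $ j)"
    by (rule member_le_sum[of i _ "\<lambda>j. v $ j * v $ j"]) (use i in auto)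
  finally show ?thesis using assms unfolding scalar_prod_def by auto
qed

lemma tr2: fixes A B :: "'a::comm_ring_1 mat"
  assumes "A \<in> carrier_mat n n" "B \<in> carrier_mat n n"
  shows "(A * B)\<^sup>T = B\<^sup>T * A\<^sup>T"
  using transpose_mult[OF assms] .

lemma tr3: fixes A B C :: "'a::comm_ring_1 mat"
  assumes "A \<in> carrier_mat n n" "B \<in> carrier_mat n n" "C \<in> carrier_mat n n"
  shows "(A * B * C)\<^sup>T = C\<^sup>T * B\<^sup>T * A\<^sup>T"
proof -
  have "(A * B * C)\<^sup>T = C\<^sup>T * (A * B)\<^sup>T" using assms by (intro tr2) auto
  also have "\<dots> = C\<^sup>T * (B\<^sup>T * A\<^sup>T)" using assms by (simp add: tr2)
  also have "\<dots> = C\<^sup>T * B\<^sup>T * A\<^sup>T" using assms by (simp add: assoc_mult_mat[of _ n n _ n _ n])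
  finally show ?thesis .
qed

lemma spectral:
  fixes A :: "real mat"
  assumes "A \<in> carrier_mat n n" "A\<^sup>T = A"
  shows "\<exists>U D. U \<in> carrier_mat n n \<and> D \<in> carrier_mat n n \<and> U\<^sup>T * U = 1\<^sub>m n \<and> diagonal_mat D
     \<and> A = U * D * U\<^sup>T"
  using assms
proof (induction n arbitrary: A)
  case 0
  show ?case
    by (rule exI[of _ "1\<^sub>m 0"], rule exI[of _ "1\<^sub>m 0"]) (use 0 in \<open>auto intro!: eq_matI simp: diagonal_mat_def\<close>)
next
  case (Suc n)
  have A: "A \<in> carrier_mat (Suc n) (Suc n)" and AT: "A\<^sup>T = A" by fact+
  obtain l v0 where v0: "v0 \<in> carrier_vec (Suc n)" "v0 \<noteq> 0\<^sub>v (Suc n)" "A *\<^sub>v v0 = l \<cdot>\<^sub>v v0"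
    using real_sym_eigen[OF A AT] by auto
  define c where "c = 1 / sqrt (v0 \<bullet> v0)"
  define v where "v = c \<cdot>\<^sub>v v0"
  have pos: "v0 \<bullet> v0 > 0" by (rule vv_pos[OF v0(1,2)])
  have v: "v \<in> carrier_vec (Suc n)" unfolding v_def using v0 by simp
  have vv: "v \<bullet> v = 1"
  proof -
    have "v \<bullet> v = c * c * (v0 \<bullet> v0)" unfolding v_def using v0(1) by simp
    also have "\<dots> = 1" unfolding c_def using pos
      by (simp add: field_simps)
    finally show ?thesis .
  qed
  have Av: "A *\<^sub>v v = l \<cdot>\<^sub>v v" unfolding v_def using v0 A
    by (simp add: mult_mat_vec smult_smult_assoc mult.commute)
  obtain H where H: "H \<in> carrier_mat (Suc n) (Suc n)" "H\<^sup>T = H" "H * H = 1\<^sub>m (Suc n)"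
     "\<forall>i<Suc n. H $$ (i,0) = v $ i"
    using householder[OF v vv] by auto
  define e0 :: "real vec" where "e0 = unit_vec (Suc n) 0"
  have e0: "e0 \<in> carrier_vec (Suc n)" unfolding e0_def by simp
  have He0: "H *\<^sub>v e0 = v"
    by (rule eq_vecI) (use H v in \<open>auto simp: e0_def scalar_prod_right_unit\<close>)
  have Hv: "H *\<^sub>v v = e0"
  proof -
    have "(H * H) *\<^sub>v e0 = H *\<^sub>v (H *\<^sub>v e0)" by (rule assoc_mult_mat_vec[OF H(1) H(1) e0])
    hence "H *\<^sub>v v = (H * H) *\<^sub>v e0" using He0 by simp
    also have "\<dots> = e0" using H e0 by simp
    finally show ?thesis .
  qed
  define B where "B = H * A * H"
  have B: "B \<in> carrier_mat (Suc n) (Suc n)" unfolding B_def using H A by simp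
  have BT: "B\<^sup>T = B"
    unfolding B_def by (simp only: tr3[OF H(1) A H(1)] H(2) AT)
  have Be0: "B *\<^sub>v e0 = l \<cdot>\<^sub>v e0"
  proof -
    have AH: "A * H \<in> carrier_mat (Suc n) (Suc n)" using A H by simp
    have Bq: "B = H * (A * H)" unfolding B_def by (rule assoc_mult_mat[OF H(1) A H(1)])
    have 1: "(H * (A * H)) *\<^sub>v e0 = H *\<^sub>v ((A * H) *\<^sub>v e0)" by (rule assoc_mult_mat_vec[OF H(1) AH e0])
    have 2: "(A * H) *\<^sub>v e0 = A *\<^sub>v (H *\<^sub>v e0)" by (rule assoc_mult_mat_vec[OF A H(1) e0])
    have "B *\<^sub>v e0 = H *\<^sub>v (A *\<^sub>v v)" unfolding Bq 1 2 He0 ..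
    also have "\<dots> = H *\<^sub>v (l \<cdot>\<^sub>v v)" unfolding Av ..
    also have "\<dots> = l \<cdot>\<^sub>v (H *\<^sub>v v)" by (rule mult_mat_vec[OF H(1) v])
    also have "\<dots> = l \<cdot>\<^sub>v e0" unfolding Hv ..
    finally show ?thesis .
  qed
  have Bc0: "B $$ (i,0) = (if i = 0 then l else 0)" if "i < Suc n" for i
  proof -
    have "(B *\<^sub>v e0) $ i = (l \<cdot>\<^sub>v e0) $ i" using Be0 by simp
    thus ?thesis using that B unfolding e0_def by (simp add: scalar_prod_right_unit)
  qed
  have Br0: "B $$ (0,j) = (if j = 0 then l else 0)" if "j < Suc n" for j
    using Bc0[OF that] BT B that by (metis carrier_matD index_transpose_mat(1) zero_less_Suc)
  define A3 where "A3 = mat n n (\<lambda>(i,j). B $$ (Suc i, Suc j))"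
  have A3: "A3 \<in> carrier_mat n n" unfolding A3_def by simp
  have A3T: "A3\<^sup>T = A3" unfolding A3_def using BT B
    by (intro eq_matI) (auto, metis Suc_less_eq carrier_matD index_transpose_mat(1))
  obtain U3 D3 where U3: "U3 \<in> carrier_mat n n" "D3 \<in> carrier_mat n n" "U3\<^sup>T * U3 = 1\<^sub>m n"
    "diagonal_mat D3" "A3 = U3 * D3 * U3\<^sup>T"
    using Suc.IH[OF A3 A3T] by blast
  define L1 :: "real mat" where "L1 = mat 1 1 (\<lambda>_. l)"
  have L1: "L1 \<in> carrier_mat 1 1" unfolding L1_def by simp
  have Bblock: "B = four_block_mat L1 (0\<^sub>m 1 n) (0\<^sub>m n 1) A3"
  proof (rule eq_matI)
    fix i j assume "i < dim_row (four_block_mat L1 (0\<^sub>m 1 n) (0\<^sub>m n 1) A3)"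
      "j < dim_col (four_block_mat L1 (0\<^sub>m 1 n) (0\<^sub>m n 1) A3)"
    hence ij: "i < Suc n" "j < Suc n" using L1 A3 by auto
    show "B $$ (i, j) = four_block_mat L1 (0\<^sub>m 1 n) (0\<^sub>m n 1) A3 $$ (i, j)"
      using ij L1 A3 Bc0 Br0 unfolding L1_def A3_def
      by (cases i; cases j) auto
  qed (use B L1 A3 in auto)
  define F where "F = four_block_mat (1\<^sub>m 1) (0\<^sub>m 1 n) (0\<^sub>m n 1) U3"
  have F: "F \<in> carrier_mat (Suc n) (Suc n)" unfolding F_def using U3 by auto
  have FT: "F\<^sup>T = four_block_mat (1\<^sub>m 1) (0\<^sub>m 1 n) (0\<^sub>m n 1) U3\<^sup>T"
    unfolding F_def using U3 by (simp add: transpose_four_block_mat[of _ 1 1 _ n _ n])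
  have FTF: "F\<^sup>T * F = 1\<^sub>m (Suc n)"
    unfolding FT unfolding F_def using U3
    by (simp add: mult_four_block_mat[of _ 1 1 _ n _ n _ _ 1 _ n] four_block_one_mat[of 1 n, simplified])
  define D where "D = four_block_mat L1 (0\<^sub>m 1 n) (0\<^sub>m n 1) D3"
  have D: "D \<in> carrier_mat (Suc n) (Suc n)" unfolding D_def using U3 L1 by auto
  have FDF: "F * D * F\<^sup>T = B"
  proof -
    have "F * D = four_block_mat L1 (0\<^sub>m 1 n) (0\<^sub>m n 1) (U3 * D3)"
      unfolding F_def D_def using U3 L1
      by (simp add: mult_four_block_mat[of _ 1 1 _ n _ n _ _ 1 _ n])
    also have "\<dots> * F\<^sup>T = four_block_mat L1 (0\<^sub>m 1 n) (0\<^sub>m n 1) (U3 * D3 * U3\<^sup>T)"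
      unfolding FT using U3 L1
      by (simp add: mult_four_block_mat[of _ 1 1 _ n _ n _ _ 1 _ n])
    finally show ?thesis by (simp only: Bblock U3(5))
  qed
  define U where "U = H * F"
  have U: "U \<in> carrier_mat (Suc n) (Suc n)" unfolding U_def using H F by simp
  have HHX: "H * (H * X) = X" if X: "X \<in> carrier_mat (Suc n) k" for X k
  proof -
    have "H * (H * X) = (H * H) * X" by (rule assoc_mult_mat[OF H(1) H(1) X, symmetric])
    also have "\<dots> = X" unfolding H(3) using X by simp
    finally show ?thesis .
  qed
  have UTU: "U\<^sup>T * U = 1\<^sub>m (Suc n)"
    unfolding U_def using H F FTF HHX by (simp add: tr2[of _ "Suc n"] assoc_mult_mat[of _ "Suc n" "Suc n" _ "Suc n" _ "Suc n"])
  have UDU: "A = U * D * U\<^sup>T"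
  proof -
    have "U * D * U\<^sup>T = H * (B * H)"
      unfolding U_def FDF[symmetric] using H F D by (simp add: tr2[of _ "Suc n"] assoc_mult_mat[of _ "Suc n" "Suc n" _ "Suc n" _ "Suc n"])
    also have "\<dots> = A" unfolding B_def using H A HHX by (simp add: assoc_mult_mat[of _ "Suc n" "Suc n" _ "Suc n" _ "Suc n"])
    finally show ?thesis by simp
  qed
  have diag: "diagonal_mat D"
    unfolding diagonal_mat_def
  proof (intro allI impI)
    fix i j assume ij: "i < dim_row D" "j < dim_col D" "i \<noteq> j"
    show "D $$ (i,j) = 0"
      using ij U3(2,4) L1 unfolding D_def diagonal_mat_def
      by (cases i; cases j) auto
  qed
  show ?case using U D UTU diag UDU by blast
qed

lemma sum_delta_mult: fixes f :: "nat \<Rightarrow> real"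
  assumes "k < n"
  shows "(\<Sum>j\<in>{0..<n}. (if k = j then c else 0) * f j) = c * f k"
proof -
  have "(\<Sum>j\<in>{0..<n}. (if k = j then c else 0) * f j) = (\<Sum>j\<in>{0..<n}. if k = j then c * f j else 0)"
    by (intro sum.cong) auto
  thus ?thesis using assms by simp
qed

lemma sym_sp:
  fixes A :: "real mat"
  assumes A: "A \<in> carrier_mat n n" and AT: "A\<^sup>T = A" and x: "x \<in> carrier_vec n" and y: "y \<in> carrier_vec n"
  shows "x \<bullet> (A *\<^sub>v y) = (A *\<^sub>v x) \<bullet> y"
  using transpose_vec_mult_scalar[OF A y x] AT by simp

lemma UUT: fixes U :: "real mat"
  assumes U: "U \<in> carrier_mat n n" and UTU: "U\<^sup>T * U = 1\<^sub>m n"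
  shows "U * U\<^sup>T = 1\<^sub>m n"
  using mat_mult_left_right_inverse[of "U\<^sup>T" n U] U UTU by simp

lemma mv_unit: fixes D :: "real mat"
  assumes D: "D \<in> carrier_mat n n" "diagonal_mat D" and i: "i < n"
  shows "D *\<^sub>v unit_vec n i = D $$ (i,i) \<cdot>\<^sub>v unit_vec n i"
proof (rule eq_vecI)
  fix j assume "j < dim_vec (D $$ (i, i) \<cdot>\<^sub>v unit_vec n i)"
  hence j: "j < n" by simp
  have "(D *\<^sub>v unit_vec n i) $ j = D $$ (j,i)" using D i j by (simp add: scalar_prod_right_unit)
  also have "\<dots> = (D $$ (i, i) \<cdot>\<^sub>v unit_vec n i) $ j"
    using D i j unfolding diagonal_mat_def by (cases "j = i") auto
  finally show "(D *\<^sub>v unit_vec n i) $ j = (D $$ (i, i) \<cdot>\<^sub>v unit_vec n i) $ j" .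
qed (use D in auto)

lemma spectral_eigvec:
  fixes A U D :: "real mat"
  assumes U: "U \<in> carrier_mat n n" and D: "D \<in> carrier_mat n n" and UTU: "U\<^sup>T * U = 1\<^sub>m n"
    and diag: "diagonal_mat D" and AUD: "A = U * D * U\<^sup>T" and i: "i < n"
  shows "A *\<^sub>v (U *\<^sub>v unit_vec n i) = D $$ (i,i) \<cdot>\<^sub>v (U *\<^sub>v unit_vec n i)"
    "U *\<^sub>v unit_vec n i \<in> carrier_vec n" "U *\<^sub>v unit_vec n i \<noteq> 0\<^sub>v n"
proof -
  define e :: "real vec" where "e = unit_vec n i"
  have e: "e \<in> carrier_vec n" unfolding e_def by simp
  have UT: "U\<^sup>T \<in> carrier_mat n n" using U by simp
  have bk: "U\<^sup>T *\<^sub>v (U *\<^sub>v e) = e"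
  proof -
    have "U\<^sup>T *\<^sub>v (U *\<^sub>v e) = (U\<^sup>T * U) *\<^sub>v e" by (rule assoc_mult_mat_vec[OF UT U e, symmetric])
    also have "\<dots> = e" using UTU e by simp
    finally show ?thesis .
  qed
  have "A *\<^sub>v (U *\<^sub>v e) = U *\<^sub>v (D *\<^sub>v (U\<^sup>T *\<^sub>v (U *\<^sub>v e)))"
    unfolding AUD using U D UT e
    by (simp add: assoc_mult_mat_vec[of _ n n _ n])
  also have "\<dots> = U *\<^sub>v (D $$ (i,i) \<cdot>\<^sub>v e)" unfolding bk by (simp add: mv_unit[OF D diag i, folded e_def])
  also have "\<dots> = D $$ (i,i) \<cdot>\<^sub>v (U *\<^sub>v e)" by (rule mult_mat_vec[OF U e])
  finally show "A *\<^sub>v (U *\<^sub>v unit_vec n i) = D $$ (i,i) \<cdot>\<^sub>v (U *\<^sub>v unit_vec n i)" unfolding e_def .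
  show "U *\<^sub>v unit_vec n i \<in> carrier_vec n" using U by simp
  show "U *\<^sub>v unit_vec n i \<noteq> 0\<^sub>v n"
  proof
    assume "U *\<^sub>v unit_vec n i = 0\<^sub>v n"
    hence "e = U\<^sup>T *\<^sub>v 0\<^sub>v n" using bk unfolding e_def by simp
    hence "e $ i = row (U\<^sup>T) i \<bullet> 0\<^sub>v n" using i UT by simp
    also have "\<dots> = 0" by (rule scalar_prod_right_zero, rule carrier_vecI) (use UT in simp)
    finally have "e $ i = 0" .
    thus False unfolding e_def using i by simp
  qed
qed

lemma sym_all_eig_zero:
  fixes A :: "real mat"
  assumes A: "A \<in> carrier_mat n n" and AT: "A\<^sup>T = A"
    and z: "\<forall>r. eigenvalue A r \<longrightarrow> r = 0"
  shows "A = 0\<^sub>m n n"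
proof -
  obtain U D where UD: "U \<in> carrier_mat n n" "D \<in> carrier_mat n n" "U\<^sup>T * U = 1\<^sub>m n" "diagonal_mat D"
    "A = U * D * U\<^sup>T" using spectral[OF A AT] by blast
  have Dii: "D $$ (i,i) = 0" if i: "i < n" for i
  proof -
    note ev = spectral_eigvec[OF UD i]
    have "eigenvalue A (D $$ (i,i))" unfolding eigenvalue_def eigenvector_def
      using ev A by auto
    thus ?thesis using z by auto
  qed
  have D0: "D = 0\<^sub>m n n"
    by (rule eq_matI) (use UD Dii in \<open>auto simp: diagonal_mat_def\<close>)
  show ?thesis using UD(1,5) unfolding D0 by simp
qed

lemma pd_sqrt_exists:
  fixes A :: "real mat"
  assumes pd: "pd_mat n A"
  shows "\<exists>S. pd_mat n S \<and> S * S * A = 1\<^sub>m n"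
proof -
  have A: "A \<in> carrier_mat n n" and AT: "A\<^sup>T = A" using pd unfolding pd_mat_def by auto
  obtain U D where UD: "U \<in> carrier_mat n n" "D \<in> carrier_mat n n" "U\<^sup>T * U = 1\<^sub>m n" "diagonal_mat D"
    "A = U * D * U\<^sup>T" using spectral[OF A AT] by blast
  have U: "U \<in> carrier_mat n n" and UT: "U\<^sup>T \<in> carrier_mat n n" using UD by auto
  have UUT': "U * U\<^sup>T = 1\<^sub>m n" using UUT UD by auto
  have Dpos: "D $$ (i,i) > 0" if i: "i < n" for i
  proof -
    note ev = spectral_eigvec[OF UD i]
    define w where "w = U *\<^sub>v unit_vec n i"
    have w: "w \<in> carrier_vec n" "w \<noteq> 0\<^sub>v n" "A *\<^sub>v w = D $$ (i,i) \<cdot>\<^sub>v w" using ev unfolding w_def by auto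
    have "0 < w \<bullet> (A *\<^sub>v w)" using pd w unfolding pd_mat_def by auto
    also have "\<dots> = D $$ (i,i) * (w \<bullet> w)" unfolding w(3) using w by simp
    finally show ?thesis using vv_pos[OF w(1,2)] by (simp add: zero_less_mult_iff)
  qed
  define E where "E = mat n n (\<lambda>(i,j). if i = j then 1 / sqrt (D $$ (i,i)) else 0)"
  have E: "E \<in> carrier_mat n n" unfolding E_def by simp
  have ET: "E\<^sup>T = E" unfolding E_def by (intro eq_matI) auto
  have EED: "E * E * D = 1\<^sub>m n"
  proof (rule eq_matI)
    fix i j assume "i < dim_row (1\<^sub>m n)" "j < dim_col (1\<^sub>m n)"
    hence ij: "i < n" "j < n" by auto
    have EE: "E * E = mat n n (\<lambda>(i,j). if i = j then 1 / D $$ (i,i) else 0)"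
    proof (rule eq_matI)
      fix a b assume "a < dim_row (mat n n (\<lambda>(i,j). if i = j then 1 / D $$ (i,i) else 0))"
        "b < dim_col (mat n n (\<lambda>(i,j). if i = j then 1 / D $$ (i,i) else 0))"
      hence ab: "a < n" "b < n" by auto
      have "(E * E) $$ (a,b) = (\<Sum>k\<in>{0..<n}. (if a = k then 1 / sqrt (D $$ (a,a)) else 0) * (if k = b then 1 / sqrt (D $$ (k,k)) else 0))"
        using ab unfolding E_def by (simp add: scalar_prod_def)
      also have "\<dots> = (\<Sum>k\<in>{0..<n}. if k = a then (if a = b then 1 / sqrt (D $$ (a,a)) * (1 / sqrt (D $$ (a,a))) else 0) else 0)"
        by (intro sum.cong refl) auto
      also have "\<dots> = (if a = b then 1 / D $$ (a,a) else 0)"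
        using ab Dpos[OF ab(1)] by (auto simp: abs_of_pos)
      finally show "(E * E) $$ (a,b) = mat n n (\<lambda>(i,j). if i = j then 1 / D $$ (i,i) else 0) $$ (a,b)"
        using ab by simp
    qed (use E in auto)
    have "(E * E * D) $$ (i,j) = (\<Sum>k\<in>{0..<n}. (if i = k then 1 / D $$ (i,i) else 0) * D $$ (k,j))"
      unfolding EE using ij UD(2) by (simp add: scalar_prod_def)
    also have "\<dots> = (\<Sum>k\<in>{0..<n}. if k = i then D $$ (i,j) / D $$ (i,i) else 0)"
      by (intro sum.cong refl) auto
    also have "\<dots> = 1\<^sub>m n $$ (i,j)"
      using ij Dpos[OF ij(1)] UD(2,4) unfolding diagonal_mat_def by auto
    finally show "(E * E * D) $$ (i,j) = 1\<^sub>m n $$ (i,j)" .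
  qed (use E UD in auto)
  define S where "S = U * E * U\<^sup>T"
  have S: "S \<in> carrier_mat n n" unfolding S_def using U E by simp
  have ST: "S\<^sup>T = S" unfolding S_def using tr3[OF U E UT] ET by simp
  have SSA: "S * S * A = 1\<^sub>m n"
  proof -
    have "S * S * A = U * (E * ((U\<^sup>T * U) * (E * ((U\<^sup>T * U) * (D * U\<^sup>T)))))"
      unfolding S_def UD(5) using U E UT UD(2)
      by (simp add: assoc_mult_mat[of _ n n _ n _ n])
    also have "\<dots> = U * ((E * E * D) * U\<^sup>T)"
      unfolding UD(3) using U E UT UD(2)
      by (simp add: assoc_mult_mat[of _ n n _ n _ n])
    also have "\<dots> = 1\<^sub>m n" unfolding EED using UT UUT' by simp
    finally show ?thesis .
  qed
  have Spos: "x \<bullet> (S *\<^sub>v x) > 0" if x: "x \<in> carrier_vec n" "x \<noteq> 0\<^sub>v n" for x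
  proof -
    define y where "y = U\<^sup>T *\<^sub>v x"
    have y: "y \<in> carrier_vec n" unfolding y_def using UT x by simp
    have Uy: "U *\<^sub>v y = x"
    proof -
      have "U *\<^sub>v y = (U * U\<^sup>T) *\<^sub>v x" unfolding y_def by (rule assoc_mult_mat_vec[OF U UT x(1), symmetric])
      thus ?thesis using UUT' x by simp
    qed
    have yn: "y \<noteq> 0\<^sub>v n" using Uy x U by auto
    have "x \<bullet> (S *\<^sub>v x) = x \<bullet> (U *\<^sub>v (E *\<^sub>v y))"
      unfolding S_def y_def using U E UT x by (simp add: assoc_mult_mat_vec[of _ n n _ n])
    also have "\<dots> = y \<bullet> (E *\<^sub>v y)"
      unfolding y_def using transpose_vec_mult_scalar[OF U, of "E *\<^sub>v (U\<^sup>T *\<^sub>v x)" x] E UT x by simp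
    also have "\<dots> = (\<Sum>k\<in>{0..<n}. y $ k * (y $ k / sqrt (D $$ (k,k))))"
    proof -
      have Ey: "E *\<^sub>v y = vec n (\<lambda>k. y $ k / sqrt (D $$ (k,k)))"
        by (rule eq_vecI) (use y in \<open>auto simp: E_def scalar_prod_def sum_delta_mult\<close>)
      show ?thesis unfolding Ey using y by (simp add: scalar_prod_def)
    qed
    finally have eq: "x \<bullet> (S *\<^sub>v x) = (\<Sum>k\<in>{0..<n}. (y $ k)^2 / sqrt (D $$ (k,k)))"
      by (simp add: power2_eq_square)
    obtain i where i: "i < n" "y $ i \<noteq> 0" using yn y by (metis eq_vecI carrier_vecD index_zero_vec)
    have "0 < (y $ i)^2 / sqrt (D $$ (i,i))" using i Dpos[OF i(1)] by simp
    also have "\<dots> \<le> (\<Sum>k\<in>{0..<n}. (y $ k)^2 / sqrt (D $$ (k,k)))"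
    proof (rule member_le_sum)
      show "i \<in> {0..<n}" using i by simp
      fix k assume "k \<in> {0..<n} - {i}"
      hence "0 < D $$ (k,k)" using Dpos by simp
      thus "0 \<le> (y $ k)^2 / sqrt (D $$ (k,k))" by simp
    qed simp
    finally show ?thesis unfolding eq .
  qed
  have "pd_mat n S" unfolding pd_mat_def using S ST Spos by auto
  thus ?thesis using SSA by blast
qed

lemma pd_sqrt_unique:
  fixes A S1 S2 :: "real mat"
  assumes A: "A \<in> carrier_mat n n" and p1: "pd_mat n S1" "S1 * S1 * A = 1\<^sub>m n"
    and p2: "pd_mat n S2" "S2 * S2 * A = 1\<^sub>m n"
  shows "S1 = S2"
proof -
  have S1: "S1 \<in> carrier_mat n n" "S1\<^sup>T = S1" and S2: "S2 \<in> carrier_mat n n" "S2\<^sup>T = S2"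
    using p1 p2 unfolding pd_mat_def by auto
  have S1p: "\<And>v. v \<in> carrier_vec n \<Longrightarrow> v \<noteq> 0\<^sub>v n \<Longrightarrow> v \<bullet> (S1 *\<^sub>v v) > 0"
   and S2p: "\<And>v. v \<in> carrier_vec n \<Longrightarrow> v \<noteq> 0\<^sub>v n \<Longrightarrow> v \<bullet> (S2 *\<^sub>v v) > 0"
    using p1 p2 unfolding pd_mat_def by auto
  have SS1: "S1 * S1 \<in> carrier_mat n n" and SS2: "S2 * S2 \<in> carrier_mat n n" using S1 S2 by auto
  have AS2: "A * (S2 * S2) = 1\<^sub>m n" using mat_mult_left_right_inverse[OF SS2 A p2(2)] .
  have PP: "S1 * S1 = S2 * S2"
  proof -
    have "S1 * S1 = (S1 * S1) * (A * (S2 * S2))" unfolding AS2 using right_mult_one_mat[OF SS1] by simp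
    also have "\<dots> = ((S1 * S1) * A) * (S2 * S2)" by (rule assoc_mult_mat[OF SS1 A SS2, symmetric])
    also have "\<dots> = S2 * S2" unfolding p1(2) using left_mult_one_mat[OF SS2] by simp
    finally show ?thesis .
  qed
  define Dm where "Dm = mat n n (\<lambda>(i,j). S1 $$ (i,j) - S2 $$ (i,j))"
  have Dm: "Dm \<in> carrier_mat n n" unfolding Dm_def by simp
  have DmT: "Dm\<^sup>T = Dm" unfolding Dm_def using S1 S2
    by (intro eq_matI) (auto, metis carrier_matD index_transpose_mat(1))
  have Dmv: "Dm *\<^sub>v u = vec n (\<lambda>i. (S1 *\<^sub>v u) $ i - (S2 *\<^sub>v u) $ i)" if u: "u \<in> carrier_vec n" for u
    by (rule eq_vecI) (use S1 S2 u in \<open>auto simp: Dm_def scalar_prod_def left_diff_distrib sum_subtractf\<close>)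
  have "\<forall>r. eigenvalue Dm r \<longrightarrow> r = 0"
  proof (intro allI impI)
    fix r assume "eigenvalue Dm r"
    then obtain u where u: "u \<in> carrier_vec n" "u \<noteq> 0\<^sub>v n" "Dm *\<^sub>v u = r \<cdot>\<^sub>v u"
      unfolding eigenvalue_def eigenvector_def using Dm by auto
    define a where "a = S1 *\<^sub>v u"
    define b where "b = S2 *\<^sub>v u"
    have a: "a \<in> carrier_vec n" and b: "b \<in> carrier_vec n" unfolding a_def b_def using S1 S2 u by auto
    have ab: "a $ i = b $ i + r * u $ i" if "i < n" for i
    proof -
      have "(Dm *\<^sub>v u) $ i = (r \<cdot>\<^sub>v u) $ i" using u(3) by simp
      thus ?thesis unfolding Dmv[OF u(1)] a_def b_def using that u by simp
    qed
    have "a \<bullet> a = b \<bullet> b"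
    proof -
      have "a \<bullet> a = u \<bullet> (S1 *\<^sub>v a)" unfolding a_def using sym_sp[OF S1 u(1), of "S1 *\<^sub>v u"] S1 u by simp
      also have "\<dots> = u \<bullet> ((S1 * S1) *\<^sub>v u)" unfolding a_def using assoc_mult_mat_vec[OF S1(1) S1(1) u(1)] by simp
      also have "\<dots> = u \<bullet> ((S2 * S2) *\<^sub>v u)" unfolding PP ..
      also have "\<dots> = u \<bullet> (S2 *\<^sub>v b)" unfolding b_def using assoc_mult_mat_vec[OF S2(1) S2(1) u(1)] by simp
      also have "\<dots> = b \<bullet> b" unfolding b_def using sym_sp[OF S2 u(1), of "S2 *\<^sub>v u"] S2 u by simp
      finally show ?thesis .
    qed
    hence e1: "(\<Sum>i\<in>{0..<n}. (b $ i + r * u $ i) * (b $ i + r * u $ i)) = (\<Sum>i\<in>{0..<n}. b $ i * b $ i)"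
      using a b ab by (simp add: scalar_prod_def)
    have e2: "(\<Sum>i\<in>{0..<n}. (b $ i + r * u $ i) * (b $ i + r * u $ i))
       = (\<Sum>i\<in>{0..<n}. b $ i * b $ i + (2 * r) * (u $ i * b $ i) + (r * r) * (u $ i * u $ i))"
      by (intro sum.cong refl) (simp add: algebra_simps)
    have e3: "(\<Sum>i\<in>{0..<n}. b $ i * b $ i + (2 * r) * (u $ i * b $ i) + (r * r) * (u $ i * u $ i))
       = (\<Sum>i\<in>{0..<n}. b $ i * b $ i) + (2 * r) * (\<Sum>i\<in>{0..<n}. u $ i * b $ i) + (r * r) * (\<Sum>i\<in>{0..<n}. u $ i * u $ i)"
      by (simp only: sum.distrib sum_distrib_left)
    have ub: "u \<bullet> b = (\<Sum>i\<in>{0..<n}. u $ i * b $ i)" using b by (simp add: scalar_prod_def)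
    have uu: "u \<bullet> u = (\<Sum>i\<in>{0..<n}. u $ i * u $ i)" using u by (simp add: scalar_prod_def)
    have "(2 * r) * (u \<bullet> b) + (r * r) * (u \<bullet> u) = 0" using e1 e2 e3 unfolding ub uu by linarith
    hence eq1: "r * (2 * (u \<bullet> b) + r * (u \<bullet> u)) = 0" by (simp add: algebra_simps)
    have "u \<bullet> a = (\<Sum>i\<in>{0..<n}. u $ i * (b $ i + r * u $ i))"
      using a by (simp add: scalar_prod_def ab)
    also have "\<dots> = (\<Sum>i\<in>{0..<n}. u $ i * b $ i + r * (u $ i * u $ i))"
      by (intro sum.cong refl) (simp add: algebra_simps)
    also have "\<dots> = u \<bullet> b + r * (u \<bullet> u)" unfolding ub uu by (simp only: sum.distrib sum_distrib_left)
    finally have "u \<bullet> a = u \<bullet> b + r * (u \<bullet> u)" .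
    hence "2 * (u \<bullet> b) + r * (u \<bullet> u) = u \<bullet> a + u \<bullet> b" by simp
    moreover have "u \<bullet> a > 0" "u \<bullet> b > 0" unfolding a_def b_def using S1p S2p u by auto
    ultimately have "2 * (u \<bullet> b) + r * (u \<bullet> u) \<noteq> 0" by simp
    thus "r = 0" using eq1 by simp
  qed
  hence D0: "Dm = 0\<^sub>m n n" using sym_all_eig_zero[OF Dm DmT] by simp
  have "S1 $$ (i,j) = S2 $$ (i,j)" if ij: "i < n" "j < n" for i j
  proof -
    have "Dm $$ (i,j) = 0" unfolding D0 using ij by simp
    thus ?thesis unfolding Dm_def using ij by simp
  qed
  thus ?thesis using S1 S2 by (intro eq_matI) auto
qed

lemma inv_sqrt_mat_char:
  assumes pd: "pd_mat n A"
  shows "pd_mat n (inv_sqrt_mat n A)" "inv_sqrt_mat n A * inv_sqrt_mat n A * A = 1\<^sub>m n"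
proof -
  have A: "A \<in> carrier_mat n n" using pd unfolding pd_mat_def by auto
  have ex1: "\<exists>!S. pd_mat n S \<and> S * S * A = 1\<^sub>m n"
    using pd_sqrt_exists[OF pd] pd_sqrt_unique[OF A] by blast
  from theI'[OF ex1] show "pd_mat n (inv_sqrt_mat n A)" "inv_sqrt_mat n A * inv_sqrt_mat n A * A = 1\<^sub>m n"
    unfolding inv_sqrt_mat_def by auto
qed

lemma off_Suc: "1 \<le> k \<Longrightarrow> blk_offset d (Suc k) = blk_offset d k + d k"
  unfolding blk_offset_def by (simp add: sum.atLeastLessThan_Suc)

lemma off_mono: "k \<le> k' \<Longrightarrow> blk_offset d k \<le> blk_offset d k'"
  unfolding blk_offset_def by (intro sum_mono2) auto

lemma qdim_off: "qdim d K = blk_offset d (Suc K)"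
  unfolding qdim_def blk_offset_def by (simp add: atLeastLessThanSuc_atLeastAtMost)

lemma blk_bound: "k \<in> {1..K} \<Longrightarrow> i < d k \<Longrightarrow> blk_offset d k + i < qdim d K"
proof -
  assume k: "k \<in> {1..K}" and i: "i < d k"
  have "blk_offset d k + i < blk_offset d (Suc k)" using k i off_Suc[of k d] by simp
  also have "\<dots> \<le> blk_offset d (Suc K)" using k by (intro off_mono) simp
  finally show ?thesis unfolding qdim_off .
qed

lemma blk_inj_aux: "1 \<le> k \<Longrightarrow> k < k' \<Longrightarrow> i < d k \<Longrightarrow> blk_offset d k + i < blk_offset d k' + i'"
proof -
  assume "1 \<le> k" "k < k'" "i < d k"
  hence "blk_offset d k + i < blk_offset d (Suc k)" using off_Suc[of k d] by simp
  also have "\<dots> \<le> blk_offset d k'" using \<open>k < k'\<close> by (intro off_mono) simp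
  finally show ?thesis by simp
qed

lemma blk_inj: "k \<in> {1..K} \<Longrightarrow> k' \<in> {1..K} \<Longrightarrow> i < d k \<Longrightarrow> i' < d k' \<Longrightarrow>
   blk_offset d k + i = blk_offset d k' + i' \<Longrightarrow> k = k'"
  using blk_inj_aux[of k k' i d i'] blk_inj_aux[of k' k i' d i]
  by (metis atLeastAtMost_iff less_irrefl linorder_neqE_nat)

lemma blk_cover: "p < qdim d K \<Longrightarrow> \<exists>k\<in>{1..K}. \<exists>i<d k. p = blk_offset d k + i"
proof (induction K)
  case 0
  then show ?case unfolding qdim_def by simp
next
  case (Suc K)
  show ?case
  proof (cases "p < qdim d K")
    case True
    then show ?thesis using Suc.IH by fastforce
  next
    case False
    have q: "qdim d (Suc K) = qdim d K + d (Suc K)" unfolding qdim_def by simp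
    have o: "blk_offset d (Suc K) = qdim d K" by (simp add: qdim_off)
    have "p - blk_offset d (Suc K) < d (Suc K)" "p = blk_offset d (Suc K) + (p - blk_offset d (Suc K))"
      using False Suc.prems unfolding q o by auto
    thus ?thesis by (intro bexI[of _ "Suc K"]) auto
  qed
qed

lemma tau_carrier: "tau d K k \<in> carrier_mat (d k) (qdim d K)"
  unfolding tau_def by simp

lemma tau_mv:
  assumes k: "k \<in> {1..K}" and w: "w \<in> carrier_vec (qdim d K)"
  shows "tau d K k *\<^sub>v w = vec (d k) (\<lambda>i. w $ (blk_offset d k + i))"
proof (rule eq_vecI)
  fix i assume "i < dim_vec (vec (d k) (\<lambda>i. w $ (blk_offset d k + i)))"
  hence i: "i < d k" by simp
  have "(tau d K k *\<^sub>v w) $ i = (\<Sum>p\<in>{0..<qdim d K}. (if p = blk_offset d k + i then 1 else 0) * w $ p)"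
    using i w unfolding tau_def by (simp add: scalar_prod_def)
  also have "\<dots> = (\<Sum>p\<in>{0..<qdim d K}. if p = blk_offset d k + i then w $ p else 0)"
    by (intro sum.cong) auto
  also have "\<dots> = w $ (blk_offset d k + i)" using blk_bound[of k K i d, OF k i] by simp
  finally show "(tau d K k *\<^sub>v w) $ i = vec (d k) (\<lambda>i. w $ (blk_offset d k + i)) $ i" using i by simp
qed (simp add: tau_def)

definition bf :: "nat \<Rightarrow> real mat \<Rightarrow> real vec \<Rightarrow> real vec \<Rightarrow> real" where
  "bf n M x y = (\<Sum>p\<in>{0..<n}. x $ p * (\<Sum>p'\<in>{0..<n}. M $$ (p,p') * y $ p'))"

lemma bf_eq: "M \<in> carrier_mat n n \<Longrightarrow> y \<in> carrier_vec n \<Longrightarrow> x \<in> carrier_vec n \<Longrightarrow> x \<bullet> (M *\<^sub>v y) = bf n M x y"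
  unfolding bf_def by (simp add: scalar_prod_def)

lemma bf_msum:
  assumes I: "finite I"
  shows "bf n (msum n n F I) x y = (\<Sum>k\<in>I. bf n (F k) x y)"
proof -
  have "bf n (msum n n F I) x y = (\<Sum>p\<in>{0..<n}. x $ p * (\<Sum>p'\<in>{0..<n}. (\<Sum>k\<in>I. F k $$ (p,p')) * y $ p'))"
    unfolding bf_def msum_def by (intro sum.cong refl) (auto intro!: sum.cong)
  also have "\<dots> = (\<Sum>p\<in>{0..<n}. \<Sum>k\<in>I. x $ p * (\<Sum>p'\<in>{0..<n}. F k $$ (p,p') * y $ p'))"
  proof (intro sum.cong refl)
    fix p
    have "(\<Sum>p'\<in>{0..<n}. (\<Sum>k\<in>I. F k $$ (p,p')) * y $ p') = (\<Sum>p'\<in>{0..<n}. \<Sum>k\<in>I. F k $$ (p,p') * y $ p')"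
      by (simp add: sum_distrib_right)
    also have "\<dots> = (\<Sum>k\<in>I. \<Sum>p'\<in>{0..<n}. F k $$ (p,p') * y $ p')" by (rule sum.swap)
    finally show "x $ p * (\<Sum>p'\<in>{0..<n}. (\<Sum>k\<in>I. F k $$ (p,p')) * y $ p') = (\<Sum>k\<in>I. x $ p * (\<Sum>p'\<in>{0..<n}. F k $$ (p,p') * y $ p'))"
      by (simp add: sum_distrib_left)
  qed
  also have "\<dots> = (\<Sum>k\<in>I. bf n (F k) x y)" unfolding bf_def by (rule sum.swap)
  finally show ?thesis .
qed

lemma msum_carrier: "msum n m F I \<in> carrier_mat n m" unfolding msum_def by simp

lemma bf_tau:
  fixes V :: "real mat"
  assumes A: "A \<in> carrier_mat a n" and B: "B \<in> carrier_mat b n" and V: "V \<in> carrier_mat a b"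
    and w: "w \<in> carrier_vec n" and x: "x \<in> carrier_vec n"
  shows "bf n (A\<^sup>T * V * B) x w = (A *\<^sub>v x) \<bullet> (V *\<^sub>v (B *\<^sub>v w))"
proof -
  have AT: "A\<^sup>T \<in> carrier_mat n a" using A by simp
  have AV: "A\<^sup>T * V \<in> carrier_mat n b" using AT V by simp
  have z: "V *\<^sub>v (B *\<^sub>v w) \<in> carrier_vec a" using V B w by simp
  have "(A\<^sup>T * V * B) *\<^sub>v w = (A\<^sup>T * V) *\<^sub>v (B *\<^sub>v w)" by (rule assoc_mult_mat_vec[OF AV B w])
  also have "\<dots> = A\<^sup>T *\<^sub>v (V *\<^sub>v (B *\<^sub>v w))" by (rule assoc_mult_mat_vec[OF AT V]) (use B w in simp)
  finally have e: "(A\<^sup>T * V * B) *\<^sub>v w = A\<^sup>T *\<^sub>v (V *\<^sub>v (B *\<^sub>v w))" .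
  have "bf n (A\<^sup>T * V * B) x w = x \<bullet> ((A\<^sup>T * V * B) *\<^sub>v w)"
    by (rule bf_eq[symmetric]) (use AV B w x in auto)
  also have "\<dots> = (A\<^sup>T *\<^sub>v (V *\<^sub>v (B *\<^sub>v w))) \<bullet> x" unfolding e
    by (rule comm_scalar_prod[OF x]) (use AT z in simp)
  also have "\<dots> = (V *\<^sub>v (B *\<^sub>v w)) \<bullet> (A *\<^sub>v x)" by (rule transpose_vec_mult_scalar[OF A x z])
  also have "\<dots> = (A *\<^sub>v x) \<bullet> (V *\<^sub>v (B *\<^sub>v w))" by (rule comm_scalar_prod[OF z]) (use A x in simp)
  finally show ?thesis .
qed

lemma cs_sum:
  fixes y :: "'i \<Rightarrow> real"
  assumes "finite I"
  shows "(\<Sum>k\<in>I. y k)^2 \<le> real (card I) * (\<Sum>k\<in>I. (y k)^2)"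
proof -
  define S1 where "S1 = (\<Sum>k\<in>I. y k)"
  define S2 where "S2 = (\<Sum>k\<in>I. (y k)^2)"
  define c where "c = real (card I)"
  have "0 \<le> (\<Sum>k\<in>I. \<Sum>l\<in>I. (y k - y l)^2)" by (intro sum_nonneg) auto
  also have "\<dots> = (\<Sum>k\<in>I. \<Sum>l\<in>I. ((y k)^2 + (y l)^2 - 2 * (y k * y l)))"
    by (intro sum.cong refl) (simp add: power2_diff)
  also have "\<dots> = (\<Sum>k\<in>I. c * (y k)^2 + S2 - 2 * (y k * S1))"
  proof (intro sum.cong refl)
    fix k
    have "(\<Sum>l\<in>I. ((y k)^2 + (y l)^2 - 2 * (y k * y l))) = (\<Sum>l\<in>I. (y k)^2) + (\<Sum>l\<in>I. (y l)^2) - (\<Sum>l\<in>I. 2 * (y k * y l))"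
      by (simp only: sum.distrib sum_subtractf)
    also have "(\<Sum>l\<in>I. (y k)^2) = c * (y k)^2" unfolding c_def by simp
    also have "(\<Sum>l\<in>I. 2 * (y k * y l)) = 2 * (y k * S1)" unfolding S1_def by (simp add: sum_distrib_left)
    finally show "(\<Sum>l\<in>I. ((y k)^2 + (y l)^2 - 2 * (y k * y l))) = c * (y k)^2 + S2 - 2 * (y k * S1)"
      unfolding S2_def .
  qed
  also have "\<dots> = (\<Sum>k\<in>I. c * (y k)^2) + (\<Sum>k\<in>I. S2) - (\<Sum>k\<in>I. 2 * (y k * S1))"
    by (simp only: sum.distrib sum_subtractf)
  also have "(\<Sum>k\<in>I. c * (y k)^2) = c * S2" unfolding S2_def by (simp add: sum_distrib_left)
  also have "(\<Sum>k\<in>I. S2) = c * S2" unfolding c_def by simp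
  also have "(\<Sum>k\<in>I. 2 * (y k * S1)) = 2 * (S1 * S1)"
    by (simp only: sum_distrib_left[symmetric] sum_distrib_right[symmetric] S1_def[symmetric])
  finally have "S1 * S1 \<le> c * S2" by (simp add: mult.commute)
  thus ?thesis unfolding S1_def S2_def c_def by (simp add: power2_eq_square)
qed

lemma int_prod:
  fixes f g :: "'a \<Rightarrow> real"
  assumes "integrable M (\<lambda>w. (f w)^2)" "integrable M (\<lambda>w. (g w)^2)"
    "f \<in> borel_measurable M" "g \<in> borel_measurable M"
  shows "integrable M (\<lambda>w. f w * g w)"
proof (rule Bochner_Integration.integrable_bound[of _ "\<lambda>w. (f w)^2 + (g w)^2"])
  show "integrable M (\<lambda>w. (f w)^2 + (g w)^2)" using assms by auto
  show "(\<lambda>w. f w * g w) \<in> borel_measurable M" using assms by auto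
  show "AE w in M. norm (f w * g w) \<le> norm ((f w)^2 + (g w)^2)"
  proof (rule AE_I2)
    fix w
    have "0 \<le> (\<bar>f w\<bar> - \<bar>g w\<bar>)^2" by simp
    hence "2 * (\<bar>f w\<bar> * \<bar>g w\<bar>) \<le> (f w)^2 + (g w)^2" by (simp add: power2_diff)
    moreover have "0 \<le> \<bar>f w\<bar> * \<bar>g w\<bar>" by simp
    ultimately have "\<bar>f w * g w\<bar> \<le> (f w)^2 + (g w)^2" unfolding abs_mult by linarith
    thus "norm (f w * g w) \<le> norm ((f w)^2 + (g w)^2)" by simp
  qed
qed

lemma int_sq_component:
  fixes X :: "'a \<Rightarrow> nat \<Rightarrow> real"
  assumes "integrable M (\<lambda>w. \<Sum>i<n. (X w i)^2)" "\<And>i. i < n \<Longrightarrow> (\<lambda>w. X w i) \<in> borel_measurable M"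
    and j: "j < n"
  shows "integrable M (\<lambda>w. (X w j)^2)"
proof (rule Bochner_Integration.integrable_bound[OF assms(1)])
  show "(\<lambda>w. (X w j)^2) \<in> borel_measurable M" using assms(2)[OF j] by auto
  show "AE w in M. norm ((X w j)^2) \<le> norm (\<Sum>i<n. (X w i)^2)"
  proof (rule AE_I2)
    fix w
    have "(X w j)^2 \<le> (\<Sum>i<n. (X w i)^2)" by (rule member_le_sum) (use j in auto)
    moreover have "0 \<le> (\<Sum>i<n. (X w i)^2)" by (intro sum_nonneg) auto
    ultimately show "norm ((X w j)^2) \<le> norm (\<Sum>i<n. (X w i)^2)" by simp
  qed
qed

lemma lin_int:
  fixes X :: "nat \<Rightarrow> 'a \<Rightarrow> nat \<Rightarrow> real"
  assumes mk: "\<And>i. i < d k \<Longrightarrow> (\<lambda>w. X k w i) \<in> borel_measurable M"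
    and ml: "\<And>i. i < d l \<Longrightarrow> (\<lambda>w. X l w i) \<in> borel_measurable M"
    and sk: "integrable M (\<lambda>w. \<Sum>i<d k. (X k w i)^2)"
    and sl: "integrable M (\<lambda>w. \<Sum>i<d l. (X l w i)^2)"
  shows "integrable M (\<lambda>w. (\<Sum>i<d k. a i * X k w i) * (\<Sum>j<d l. b j * X l w j))"
proof -
  have int: "integrable M (\<lambda>w. X k w i * X l w j)" if i: "i < d k" and j: "j < d l" for i j
    by (rule int_prod[OF int_sq_component[OF sk mk i] int_sq_component[OF sl ml j] mk[OF i] ml[OF j]])
  have "integrable M (\<lambda>w. \<Sum>i<d k. \<Sum>j<d l. (a i * b j) * (X k w i * X l w j))"
    by (intro Bochner_Integration.integrable_sum integrable_mult_right int) auto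
  thus ?thesis by (simp add: sum_product mult.commute mult.left_commute)
qed

lemma covop_form:
  fixes X :: "nat \<Rightarrow> 'a \<Rightarrow> nat \<Rightarrow> real"
  assumes mk: "\<And>i. i < d k \<Longrightarrow> (\<lambda>w. X k w i) \<in> borel_measurable M"
    and ml: "\<And>i. i < d l \<Longrightarrow> (\<lambda>w. X l w i) \<in> borel_measurable M"
    and sk: "integrable M (\<lambda>w. \<Sum>i<d k. (X k w i)^2)"
    and sl: "integrable M (\<lambda>w. \<Sum>i<d l. (X l w i)^2)"
    and z: "z \<in> carrier_vec (d k)" and z': "z' \<in> carrier_vec (d l)"
  shows "z \<bullet> (covop M X d k l *\<^sub>v z') =
    integral\<^sup>L M (\<lambda>w. (\<Sum>i<d k. z $ i * X k w i) * (\<Sum>j<d l. z' $ j * X l w j))"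
proof -
  have int: "integrable M (\<lambda>w. X k w i * X l w j)" if i: "i < d k" and j: "j < d l" for i j
    by (rule int_prod[OF int_sq_component[OF sk mk i] int_sq_component[OF sl ml j] mk[OF i] ml[OF j]])
  have "z \<bullet> (covop M X d k l *\<^sub>v z') = (\<Sum>i<d k. z $ i * (\<Sum>j<d l. integral\<^sup>L M (\<lambda>w. X k w i * X l w j) * z' $ j))"
    using z z' unfolding covop_def by (simp add: scalar_prod_def lessThan_atLeast0)
  also have "\<dots> = (\<Sum>i<d k. \<Sum>j<d l. integral\<^sup>L M (\<lambda>w. (z $ i * z' $ j) * (X k w i * X l w j)))"
    by (simp add: sum_distrib_left mult.commute mult.left_commute)
  also have "\<dots> = (\<Sum>i<d k. integral\<^sup>L M (\<lambda>w. \<Sum>j<d l. (z $ i * z' $ j) * (X k w i * X l w j)))"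
    by (intro sum.cong refl Bochner_Integration.integral_sum[symmetric] integrable_mult_right int) auto
  also have "\<dots> = integral\<^sup>L M (\<lambda>w. \<Sum>i<d k. \<Sum>j<d l. (z $ i * z' $ j) * (X k w i * X l w j))"
    by (intro Bochner_Integration.integral_sum[symmetric] Bochner_Integration.integrable_sum integrable_mult_right int) auto
  also have "\<dots> = integral\<^sup>L M (\<lambda>w. (\<Sum>i<d k. z $ i * X k w i) * (\<Sum>j<d l. z' $ j * X l w j))"
    by (simp add: sum_product mult.commute mult.left_commute)
  finally show ?thesis .
qed

locale cca =
  fixes M :: "'a measure" and X :: "nat \<Rightarrow> 'a \<Rightarrow> nat \<Rightarrow> real"
    and d :: "nat \<Rightarrow> nat" and K :: nat
  assumes ps: "prob_space M"
    and K2: "K \<ge> 2"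
    and meas: "\<And>k i. k \<in> {1..K} \<Longrightarrow> i < d k \<Longrightarrow> (\<lambda>\<omega>. X k \<omega> i) \<in> borel_measurable M"
    and sq: "\<And>k. k \<in> {1..K} \<Longrightarrow> integrable M (\<lambda>\<omega>. \<Sum>i<d k. (X k \<omega> i)\<^sup>2)"
    and inv: "\<And>k. k \<in> {1..K} \<Longrightarrow> invertible_mat (covop M X d k k)"
begin

abbreviation "q \<equiv> qdim d K"
abbreviation "V k l \<equiv> covop M X d k l"
abbreviation "tt k \<equiv> tau d K k"
abbreviation "Phi \<equiv> Phi_op M X d K"
abbreviation "Psi \<equiv> Psi_op M X d K"

definition Y :: "real vec \<Rightarrow> nat \<Rightarrow> 'a \<Rightarrow> real" where
  "Y w k \<omega> = (\<Sum>i<d k. w $ (blk_offset d k + i) * X k \<omega> i)"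

lemma V_carrier: "V k l \<in> carrier_mat (d k) (d l)"
  unfolding covop_def by simp

lemma F_carrier: "(tt k)\<^sup>T * V k l * tt l \<in> carrier_mat q q"
  using tau_carrier[of d K k] tau_carrier[of d K l] V_carrier[of k l] by simp

lemma Phi_carrier: "Phi \<in> carrier_mat q q"
  unfolding Phi_op_def by (rule msum_carrier)

lemma Psi_carrier: "Psi \<in> carrier_mat q q"
  unfolding Psi_op_def by (rule msum_carrier)

lemma form_kl:
  assumes x: "x \<in> carrier_vec q" and w: "w \<in> carrier_vec q" and k: "k \<in> {1..K}" and l: "l \<in> {1..K}"
  shows "bf q ((tt k)\<^sup>T * V k l * tt l) x w = integral\<^sup>L M (\<lambda>\<omega>. Y x k \<omega> * Y w l \<omega>)"
proof -
  have "bf q ((tt k)\<^sup>T * V k l * tt l) x w = (tt k *\<^sub>v x) \<bullet> (V k l *\<^sub>v (tt l *\<^sub>v w))"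
    by (rule bf_tau[OF tau_carrier tau_carrier V_carrier w x])
  also have "\<dots> = vec (d k) (\<lambda>i. x $ (blk_offset d k + i)) \<bullet> (V k l *\<^sub>v vec (d l) (\<lambda>i. w $ (blk_offset d l + i)))"
    unfolding tau_mv[OF k x] tau_mv[OF l w] ..
  also have "\<dots> = integral\<^sup>L M (\<lambda>\<omega>. (\<Sum>i<d k. vec (d k) (\<lambda>i. x $ (blk_offset d k + i)) $ i * X k \<omega> i)
       * (\<Sum>j<d l. vec (d l) (\<lambda>i. w $ (blk_offset d l + i)) $ j * X l \<omega> j))"
    by (rule covop_form) (use meas sq k l in auto)
  also have "\<dots> = integral\<^sup>L M (\<lambda>\<omega>. Y x k \<omega> * Y w l \<omega>)"
    unfolding Y_def by (intro Bochner_Integration.integral_cong refl arg_cong2[where f = "(*)"] sum.cong) auto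
  finally show ?thesis .
qed

lemma Y_int:
  assumes k: "k \<in> {1..K}" and l: "l \<in> {1..K}"
  shows "integrable M (\<lambda>\<omega>. Y x k \<omega> * Y w l \<omega>)"
  unfolding Y_def by (rule lin_int) (use meas sq k l in auto)

lemma QPhi:
  assumes x: "x \<in> carrier_vec q" and w: "w \<in> carrier_vec q"
  shows "x \<bullet> (Phi *\<^sub>v w) = (\<Sum>k\<in>{1..K}. integral\<^sup>L M (\<lambda>\<omega>. Y x k \<omega> * Y w k \<omega>))"
proof -
  have "x \<bullet> (Phi *\<^sub>v w) = bf q Phi x w" by (rule bf_eq[OF Phi_carrier w x])
  also have "\<dots> = (\<Sum>k\<in>{1..K}. bf q ((tt k)\<^sup>T * V k k * tt k) x w)"
    unfolding Phi_op_def by (rule bf_msum) simp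
  also have "\<dots> = (\<Sum>k\<in>{1..K}. integral\<^sup>L M (\<lambda>\<omega>. Y x k \<omega> * Y w k \<omega>))"
    by (intro sum.cong refl form_kl x w) auto
  finally show ?thesis .
qed

lemma QPsi:
  assumes x: "x \<in> carrier_vec q" and w: "w \<in> carrier_vec q"
  shows "x \<bullet> (Psi *\<^sub>v w) = (\<Sum>k\<in>{1..K}. \<Sum>l\<in>{1..K}-{k}. integral\<^sup>L M (\<lambda>\<omega>. Y x k \<omega> * Y w l \<omega>))"
proof -
  have "x \<bullet> (Psi *\<^sub>v w) = bf q Psi x w" by (rule bf_eq[OF Psi_carrier w x])
  also have "\<dots> = (\<Sum>k\<in>{1..K}. bf q (msum q q (\<lambda>l. (tt k)\<^sup>T * V k l * tt l) ({1..K} - {k})) x w)"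
    unfolding Psi_op_def by (rule bf_msum) simp
  also have "\<dots> = (\<Sum>k\<in>{1..K}. \<Sum>l\<in>{1..K}-{k}. bf q ((tt k)\<^sup>T * V k l * tt l) x w)"
    by (intro sum.cong refl bf_msum) simp
  also have "\<dots> = (\<Sum>k\<in>{1..K}. \<Sum>l\<in>{1..K}-{k}. integral\<^sup>L M (\<lambda>\<omega>. Y x k \<omega> * Y w l \<omega>))"
    by (intro sum.cong refl form_kl x w) auto
  finally show ?thesis .
qed

lemma quad_bounds:
  assumes w: "w \<in> carrier_vec q"
  shows "0 \<le> w \<bullet> (Phi *\<^sub>v w) + w \<bullet> (Psi *\<^sub>v w)"
    "w \<bullet> (Phi *\<^sub>v w) + w \<bullet> (Psi *\<^sub>v w) \<le> real K * (w \<bullet> (Phi *\<^sub>v w))"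
proof -
  define E where "E k l = integral\<^sup>L M (\<lambda>\<omega>. Y w k \<omega> * Y w l \<omega>)" for k l
  define S where "S \<omega> = (\<Sum>k\<in>{1..K}. Y w k \<omega>)" for \<omega>
  have sum_split: "w \<bullet> (Phi *\<^sub>v w) + w \<bullet> (Psi *\<^sub>v w) = (\<Sum>k\<in>{1..K}. \<Sum>l\<in>{1..K}. E k l)"
  proof -
    have "w \<bullet> (Phi *\<^sub>v w) + w \<bullet> (Psi *\<^sub>v w) = (\<Sum>k\<in>{1..K}. E k k + (\<Sum>l\<in>{1..K}-{k}. E k l))"
      unfolding QPhi[OF w w] QPsi[OF w w] E_def by (simp add: sum.distrib)
    also have "\<dots> = (\<Sum>k\<in>{1..K}. \<Sum>l\<in>{1..K}. E k l)"
    proof (intro sum.cong refl)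
      fix k assume "k \<in> {1..K}"
      thus "E k k + (\<Sum>l\<in>{1..K}-{k}. E k l) = (\<Sum>l\<in>{1..K}. E k l)"
        using sum.remove[of "{1..K}" k "E k"] by simp
    qed
    finally show ?thesis .
  qed
  have int: "\<And>k l. k \<in> {1..K} \<Longrightarrow> l \<in> {1..K} \<Longrightarrow> integrable M (\<lambda>\<omega>. Y w k \<omega> * Y w l \<omega>)"
    by (rule Y_int)
  have ES: "(\<Sum>k\<in>{1..K}. \<Sum>l\<in>{1..K}. E k l) = integral\<^sup>L M (\<lambda>\<omega>. S \<omega> * S \<omega>)"
  proof -
    have "(\<Sum>k\<in>{1..K}. \<Sum>l\<in>{1..K}. E k l) = (\<Sum>k\<in>{1..K}. integral\<^sup>L M (\<lambda>\<omega>. \<Sum>l\<in>{1..K}. Y w k \<omega> * Y w l \<omega>))"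
      unfolding E_def by (intro sum.cong refl Bochner_Integration.integral_sum[symmetric] int) auto
    also have "\<dots> = integral\<^sup>L M (\<lambda>\<omega>. \<Sum>k\<in>{1..K}. \<Sum>l\<in>{1..K}. Y w k \<omega> * Y w l \<omega>)"
      by (intro Bochner_Integration.integral_sum[symmetric] Bochner_Integration.integrable_sum int) auto
    also have "\<dots> = integral\<^sup>L M (\<lambda>\<omega>. S \<omega> * S \<omega>)"
      unfolding S_def by (simp add: sum_product)
    finally show ?thesis .
  qed
  have intS: "integrable M (\<lambda>\<omega>. S \<omega> * S \<omega>)"
    unfolding S_def sum_product by (intro Bochner_Integration.integrable_sum int) auto
  show "0 \<le> w \<bullet> (Phi *\<^sub>v w) + w \<bullet> (Psi *\<^sub>v w)"
    unfolding sum_split ES by (intro Bochner_Integration.integral_nonneg) simp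
  have EK: "real K * (w \<bullet> (Phi *\<^sub>v w)) = integral\<^sup>L M (\<lambda>\<omega>. real K * (\<Sum>k\<in>{1..K}. Y w k \<omega> * Y w k \<omega>))"
  proof -
    have "real K * (w \<bullet> (Phi *\<^sub>v w)) = real K * integral\<^sup>L M (\<lambda>\<omega>. \<Sum>k\<in>{1..K}. Y w k \<omega> * Y w k \<omega>)"
      unfolding QPhi[OF w w] by (subst Bochner_Integration.integral_sum) (use int in auto)
    thus ?thesis by simp
  qed
  have intK: "integrable M (\<lambda>\<omega>. real K * (\<Sum>k\<in>{1..K}. Y w k \<omega> * Y w k \<omega>))"
    by (intro integrable_mult_right Bochner_Integration.integrable_sum int) auto
  show "w \<bullet> (Phi *\<^sub>v w) + w \<bullet> (Psi *\<^sub>v w) \<le> real K * (w \<bullet> (Phi *\<^sub>v w))"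
    unfolding sum_split ES EK
  proof (rule integral_mono[OF intS intK])
    fix \<omega>
    have "(S \<omega>)^2 \<le> real (card {1..K}) * (\<Sum>k\<in>{1..K}. (Y w k \<omega>)^2)"
      unfolding S_def by (rule cs_sum) simp
    thus "S \<omega> * S \<omega> \<le> real K * (\<Sum>k\<in>{1..K}. Y w k \<omega> * Y w k \<omega>)"
      by (simp add: power2_eq_square)
  qed
qed

end

lemma mv_zero: fixes B :: "real mat" shows "B *\<^sub>v 0\<^sub>v (dim_col B) = 0\<^sub>v (dim_row B)"
  by (rule eq_vecI) (auto intro: scalar_prod_right_zero carrier_vecI)

lemma invertible_kernel:
  fixes A :: "real mat"
  assumes inv: "invertible_mat A" and A: "A \<in> carrier_mat n n" and z: "z \<in> carrier_vec n"
    and Az: "A *\<^sub>v z = 0\<^sub>v n"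
  shows "z = 0\<^sub>v n"
proof -
  obtain B where B: "A * B = 1\<^sub>m (dim_row A)" "B * A = 1\<^sub>m (dim_row B)"
    using inv unfolding invertible_mat_def inverts_mat_def by blast
  have cB: "dim_col B = n" using arg_cong[OF B(1), of dim_col] A by simp
  have rB: "dim_row B = n" using arg_cong[OF B(2), of dim_col] A by simp
  have Bc: "B \<in> carrier_mat n n" using cB rB by auto
  have "z = (B * A) *\<^sub>v z" using B(2) rB z by simp
  also have "\<dots> = B *\<^sub>v (A *\<^sub>v z)" by (rule assoc_mult_mat_vec[OF Bc A z])
  also have "\<dots> = 0\<^sub>v n" unfolding Az using mv_zero[of B] cB rB by simp
  finally show ?thesis .
qed

lemma msum_T:
  assumes "\<And>k. k \<in> I \<Longrightarrow> F k \<in> carrier_mat n n"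
  shows "(msum n n F I)\<^sup>T = msum n n (\<lambda>k. (F k)\<^sup>T) I"
proof -
  have t: "(F k)\<^sup>T $$ (i,j) = F k $$ (j,i)" if "k \<in> I" "i < n" "j < n" for k i j
    using assms[OF that(1)] that by (metis carrier_matD(1) carrier_matD(2) index_transpose_mat(1))
  show ?thesis by (rule eq_matI) (auto simp: msum_def t intro!: sum.cong)
qed

lemma msum_cong: "(\<And>k. k \<in> I \<Longrightarrow> F k = G k) \<Longrightarrow> msum n m F I = msum n m G I"
  unfolding msum_def by (intro eq_matI) auto

lemma sum_swap_neq:
  assumes A: "finite A"
  shows "(\<Sum>k\<in>A. \<Sum>l\<in>A-{k}. g l k) = (\<Sum>k\<in>A. \<Sum>l\<in>A-{k}. (g k l :: real))"
proof -
  have h: "(\<Sum>l\<in>A-{k}. f l) = (\<Sum>l\<in>A. if l = k then 0 else f l)" for f :: "_ \<Rightarrow> real" and k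
    by (rule sum.mono_neutral_cong_right[symmetric]) (use A in auto)
  have "(\<Sum>k\<in>A. \<Sum>l\<in>A-{k}. g l k) = (\<Sum>k\<in>A. \<Sum>l\<in>A. if l = k then 0 else g l k)"
    by (simp only: h)
  also have "\<dots> = (\<Sum>l\<in>A. \<Sum>k\<in>A. if l = k then 0 else g l k)" by (rule sum.swap)
  also have "\<dots> = (\<Sum>l\<in>A. \<Sum>k\<in>A. if k = l then 0 else g l k)" by (intro sum.cong refl) auto
  also have "\<dots> = (\<Sum>k\<in>A. \<Sum>l\<in>A-{k}. g k l)" by (simp only: h)
  finally show ?thesis .
qed

context cca begin

lemma V_T: "(V k l)\<^sup>T = V l k"
  unfolding covop_def by (intro eq_matI) (auto simp: mult.commute)

lemma F_T: "((tt k)\<^sup>T * V k l * tt l)\<^sup>T = (tt l)\<^sup>T * V l k * tt k"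
proof -
  have c1: "(tt k)\<^sup>T * V k l \<in> carrier_mat q (d l)" using tau_carrier[of d K k] V_carrier[of k l] by simp
  have "((tt k)\<^sup>T * V k l * tt l)\<^sup>T = (tt l)\<^sup>T * ((tt k)\<^sup>T * V k l)\<^sup>T"
    by (rule transpose_mult[OF c1 tau_carrier[of d K l]])
  also have "((tt k)\<^sup>T * V k l)\<^sup>T = (V k l)\<^sup>T * (tt k)"
    using transpose_mult[of "(tt k)\<^sup>T" q "d k" "V k l" "d l"] tau_carrier[of d K k] V_carrier[of k l] by simp
  also have "(tt l)\<^sup>T * ((V k l)\<^sup>T * tt k) = (tt l)\<^sup>T * (V k l)\<^sup>T * tt k"
    by (rule assoc_mult_mat[symmetric, of _ q "d l"]) (use tau_carrier[of d K l] tau_carrier[of d K k] V_carrier[of k l] in auto)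
  finally show ?thesis unfolding V_T .
qed

lemma Phi_T: "Phi\<^sup>T = Phi"
  unfolding Phi_op_def by (subst msum_T) (auto intro!: msum_cong F_carrier simp: F_T)

lemma Psi_T: "Psi\<^sup>T = Psi"
proof -
  have "Psi\<^sup>T = msum q q (\<lambda>k. msum q q (\<lambda>l. (tt l)\<^sup>T * V l k * tt k) ({1..K} - {k})) {1..K}"
    unfolding Psi_op_def
    by (subst msum_T) (auto intro!: msum_cong msum_carrier simp: msum_T F_carrier F_T)
  also have "\<dots> = Psi"
    unfolding Psi_op_def msum_def
    by (intro eq_matI) (auto intro: sum_swap_neq)
  finally show ?thesis .
qed

lemma Y_meas: assumes k: "k \<in> {1..K}" shows "Y w k \<in> borel_measurable M"
  unfolding Y_def
  by (intro borel_measurable_sum borel_measurable_times borel_measurable_const meas[OF k]) simp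

lemma Phi_pos:
  assumes w: "w \<in> carrier_vec q" "w \<noteq> 0\<^sub>v q"
  shows "w \<bullet> (Phi *\<^sub>v w) > 0"
proof -
  obtain p where p: "p < q" "w $ p \<noteq> 0" using w by (metis eq_vecI carrier_vecD index_zero_vec)
  obtain k i0 where k: "k \<in> {1..K}" and i0: "i0 < d k" and pk: "p = blk_offset d k + i0"
    using blk_cover[OF p(1)] by blast
  have nn: "0 \<le> integral\<^sup>L M (\<lambda>\<omega>. Y w k' \<omega> * Y w k' \<omega>)" for k'
    by (intro Bochner_Integration.integral_nonneg) simp
  have pos: "0 < integral\<^sup>L M (\<lambda>\<omega>. Y w k \<omega> * Y w k \<omega>)"
  proof (rule ccontr)
    assume "\<not> ?thesis"
    hence z0: "integral\<^sup>L M (\<lambda>\<omega>. Y w k \<omega> * Y w k \<omega>) = 0" using nn[of k] by simp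
    have "AE \<omega> in M. Y w k \<omega> * Y w k \<omega> = 0"
      using integral_nonneg_eq_0_iff_AE[OF Y_int[OF k k, of w w]] z0 by simp
    hence AEY: "AE \<omega> in M. Y w k \<omega> = 0" by simp
    define z where "z = vec (d k) (\<lambda>i. w $ (blk_offset d k + i))"
    have z: "z \<in> carrier_vec (d k)" unfolding z_def by simp
    have Vz: "V k k *\<^sub>v z = 0\<^sub>v (d k)"
    proof (rule eq_vecI)
      fix j assume "j < dim_vec (0\<^sub>v (d k) :: real vec)"
      hence j: "j < d k" by simp
      have "(V k k *\<^sub>v z) $ j = unit_vec (d k) j \<bullet> (V k k *\<^sub>v z)"
        using j V_carrier[of k k] z by (simp add: comm_scalar_prod[of _ "d k"] scalar_prod_right_unit)
      also have "\<dots> = integral\<^sup>L M (\<lambda>\<omega>. (\<Sum>i<d k. unit_vec (d k) j $ i * X k \<omega> i) * (\<Sum>j'<d k. z $ j' * X k \<omega> j'))"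
        by (rule covop_form) (use meas sq k z in auto)
      also have "\<dots> = integral\<^sup>L M (\<lambda>\<omega>. X k \<omega> j * Y w k \<omega>)"
      proof (intro Bochner_Integration.integral_cong refl)
        fix \<omega>
        have "(\<Sum>i<d k. unit_vec (d k) j $ i * X k \<omega> i) = (\<Sum>i<d k. if i = j then X k \<omega> i else 0)"
          by (intro sum.cong refl) (use j in auto)
        also have "\<dots> = X k \<omega> j" using j by simp
        finally show "(\<Sum>i<d k. unit_vec (d k) j $ i * X k \<omega> i) * (\<Sum>j'<d k. z $ j' * X k \<omega> j') = X k \<omega> j * Y w k \<omega>"
          unfolding Y_def z_def by simp
      qed
      also have "\<dots> = integral\<^sup>L M (\<lambda>\<omega>. 0)"
        by (rule integral_cong_AE) (use AEY meas[OF k j] Y_meas[OF k, of w] in \<open>auto elim!: AE_mp\<close>)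
      finally show "(V k k *\<^sub>v z) $ j = 0\<^sub>v (d k) $ j" using j by simp
    qed (use V_carrier in auto)
    have "z = 0\<^sub>v (d k)" by (rule invertible_kernel[OF inv[OF k] V_carrier z Vz])
    hence "z $ i0 = 0" using i0 by simp
    thus False using p pk unfolding z_def using i0 by simp
  qed
  have "w \<bullet> (Phi *\<^sub>v w) = (\<Sum>k'\<in>{1..K}. integral\<^sup>L M (\<lambda>\<omega>. Y w k' \<omega> * Y w k' \<omega>))"
    by (rule QPhi[OF w(1) w(1)])
  also have "\<dots> \<ge> integral\<^sup>L M (\<lambda>\<omega>. Y w k \<omega> * Y w k \<omega>)"
    by (rule member_le_sum) (use k nn in auto)
  finally show ?thesis using pos by simp
qed

lemma Phi_pd: "pd_mat q Phi"
  unfolding pd_mat_def using Phi_carrier Phi_T Phi_pos by auto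

end

context cca begin

abbreviation "SS \<equiv> inv_sqrt_mat q Phi"
abbreviation "TT \<equiv> T_op M X d K"

lemma S_facts: "SS \<in> carrier_mat q q" "SS\<^sup>T = SS" "SS * SS * Phi = 1\<^sub>m q"
  using inv_sqrt_mat_char[OF Phi_pd] unfolding pd_mat_def by auto

lemma S_pd: "pd_mat q SS" using inv_sqrt_mat_char[OF Phi_pd] by auto

lemma SPhiS: "SS * Phi * SS = 1\<^sub>m q"
proof -
  have c: "SS * Phi \<in> carrier_mat q q" using S_facts Phi_carrier by simp
  have "SS * (SS * Phi) = 1\<^sub>m q"
    using S_facts(3) assoc_mult_mat[OF S_facts(1) S_facts(1) Phi_carrier] by simp
  thus ?thesis using mat_mult_left_right_inverse[OF S_facts(1) c] by simp
qed

lemma PhiSS: "Phi * SS * SS = 1\<^sub>m q"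
proof -
  have "(SS * SS * Phi)\<^sup>T = Phi\<^sup>T * SS\<^sup>T * SS\<^sup>T" by (rule tr3[OF S_facts(1) S_facts(1) Phi_carrier])
  thus ?thesis using S_facts Phi_T by simp
qed

lemma T_def': "TT = SS * Psi * SS" unfolding T_op_def ..

lemma T_carrier: "TT \<in> carrier_mat q q" unfolding T_def' using S_facts Psi_carrier by simp

lemma T_T: "TT\<^sup>T = TT"
  unfolding T_def' using tr3[OF S_facts(1) Psi_carrier S_facts(1)] S_facts(2) Psi_T by simp

lemma eig_bounds:
  assumes ev: "eigenvalue TT r"
  shows "-1 \<le> r \<and> r \<le> real K * (real K - 1)"
proof -
  obtain v where v: "v \<in> carrier_vec q" "v \<noteq> 0\<^sub>v q" "TT *\<^sub>v v = r \<cdot>\<^sub>v v"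
    using ev T_carrier unfolding eigenvalue_def eigenvector_def by auto
  note Sc = S_facts(1)
  define w where "w = SS *\<^sub>v v"
  have w: "w \<in> carrier_vec q" unfolding w_def using Sc v by simp
  have SPsi: "SS * Psi \<in> carrier_mat q q" using Sc Psi_carrier by simp
  have SPhi: "SS * Phi \<in> carrier_mat q q" using Sc Phi_carrier by simp
  have Tv: "TT *\<^sub>v v = SS *\<^sub>v (Psi *\<^sub>v w)"
    unfolding T_def' w_def
    using assoc_mult_mat_vec[OF SPsi Sc v(1)] assoc_mult_mat_vec[OF Sc Psi_carrier, of "SS *\<^sub>v v"] Sc v by simp
  have vT: "v \<bullet> (TT *\<^sub>v v) = w \<bullet> (Psi *\<^sub>v w)"
    unfolding Tv w_def by (rule sym_sp[OF Sc S_facts(2) v(1)]) (use Psi_carrier Sc v in simp)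
  have vv: "v \<bullet> v = w \<bullet> (Phi *\<^sub>v w)"
  proof -
    have "v = (SS * Phi * SS) *\<^sub>v v" unfolding SPhiS using v by simp
    also have "\<dots> = SS *\<^sub>v (Phi *\<^sub>v w)"
      unfolding w_def using assoc_mult_mat_vec[OF SPhi Sc v(1)] assoc_mult_mat_vec[OF Sc Phi_carrier, of "SS *\<^sub>v v"] Sc v
      by simp
    finally have "v \<bullet> v = v \<bullet> (SS *\<^sub>v (Phi *\<^sub>v w))" by simp
    also have "\<dots> = w \<bullet> (Phi *\<^sub>v w)"
      unfolding w_def by (rule sym_sp[OF Sc S_facts(2) v(1)]) (use Phi_carrier w w_def in simp)
    finally show ?thesis .
  qed
  define a where "a = w \<bullet> (Phi *\<^sub>v w)"
  have apos: "a > 0" unfolding a_def vv[symmetric] by (rule vv_pos[OF v(1,2)])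
  have b: "w \<bullet> (Psi *\<^sub>v w) = r * a"
    unfolding a_def vv[symmetric] vT[symmetric] v(3) using v by simp
  have q1: "0 \<le> a + r * a" using quad_bounds(1)[OF w] unfolding b a_def .
  have q2: "a + r * a \<le> real K * a" using quad_bounds(2)[OF w] unfolding b a_def .
  have "0 \<le> (1 + r) * a" using q1 by (simp add: algebra_simps)
  hence r1: "-1 \<le> r" using apos by (simp add: zero_le_mult_iff)
  have "(1 + r) * a \<le> real K * a" using q2 by (simp add: algebra_simps)
  hence "1 + r \<le> real K" using apos by simp
  moreover have "real K - 1 \<le> real K * (real K - 1)"
  proof -
    have "0 \<le> (real K - 1) * (real K - 1)" by simp
    thus ?thesis by (simp add: algebra_simps)
  qed
  ultimately show ?thesis using r1 by simp
qed

lemma tt_unit: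
  assumes a: "a \<in> {1..K}" and k: "k \<in> {1..K}" and i: "i < d k"
  shows "tt a *\<^sub>v unit_vec q (blk_offset d k + i) = (if a = k then unit_vec (d a) i else 0\<^sub>v (d a))"
proof -
  have p: "blk_offset d k + i < q" by (rule blk_bound[of _ K _ d, OF k i])
  have "tt a *\<^sub>v unit_vec q (blk_offset d k + i) = vec (d a) (\<lambda>i'. unit_vec q (blk_offset d k + i) $ (blk_offset d a + i'))"
    by (rule tau_mv[OF a]) simp
  also have "\<dots> = (if a = k then unit_vec (d a) i else 0\<^sub>v (d a))"
  proof (rule eq_vecI)
    fix i' assume "i' < dim_vec (if a = k then unit_vec (d a) i else 0\<^sub>v (d a))"
    hence i': "i' < d a" by (cases "a = k") auto
    have pa: "blk_offset d a + i' < q" by (rule blk_bound[of _ K _ d, OF a i'])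
    have iff: "(blk_offset d a + i' = blk_offset d k + i) \<longleftrightarrow> (a = k \<and> i' = i)"
      using blk_inj[OF a k i' i] by auto
    show "vec (d a) (\<lambda>i'. unit_vec q (blk_offset d k + i) $ (blk_offset d a + i')) $ i' =
       (if a = k then unit_vec (d a) i else 0\<^sub>v (d a)) $ i'"
      using i' pa p iff i by auto
  qed (cases "a = k"; simp)
  finally show ?thesis .
qed

lemma Psi_entry:
  assumes k: "k \<in> {1..K}" and l: "l \<in> {1..K}" and kl: "k \<noteq> l" and i: "i < d k" and j: "j < d l"
  shows "Psi $$ (blk_offset d k + i, blk_offset d l + j) = V k l $$ (i,j)"
proof -
  define p where "p = blk_offset d k + i"
  define p' where "p' = blk_offset d l + j"
  have p: "p < q" unfolding p_def by (rule blk_bound[of _ K _ d, OF k i])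
  have p': "p' < q" unfolding p'_def by (rule blk_bound[of _ K _ d, OF l j])
  define ep :: "real vec" where "ep = unit_vec q p"
  define ep' :: "real vec" where "ep' = unit_vec q p'"
  have ep: "ep \<in> carrier_vec q" and ep': "ep' \<in> carrier_vec q" unfolding ep_def ep'_def by auto
  have "Psi $$ (p,p') = ep \<bullet> (Psi *\<^sub>v ep')"
    using p p' Psi_carrier ep' unfolding ep_def ep'_def
    by (simp add: comm_scalar_prod[of _ q] scalar_prod_right_unit)
  also have "\<dots> = bf q Psi ep ep'" by (rule bf_eq[OF Psi_carrier ep' ep])
  also have "\<dots> = (\<Sum>a\<in>{1..K}. \<Sum>b\<in>{1..K}-{a}. bf q ((tt a)\<^sup>T * V a b * tt b) ep ep')"
    unfolding Psi_op_def by (simp add: bf_msum)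
  also have "\<dots> = (\<Sum>a\<in>{1..K}. \<Sum>b\<in>{1..K}-{a}. (tt a *\<^sub>v ep) \<bullet> (V a b *\<^sub>v (tt b *\<^sub>v ep')))"
    by (intro sum.cong refl bf_tau[OF tau_carrier tau_carrier V_carrier ep' ep])
  also have "\<dots> = (\<Sum>a\<in>{1..K}. \<Sum>b\<in>{1..K}-{a}. if a = k then (if b = l then V k l $$ (i,j) else 0) else 0)"
  proof (intro sum.cong refl)
    fix a b assume a: "a \<in> {1..K}" and b: "b \<in> {1..K} - {a}"
    have ta: "tt a *\<^sub>v ep = (if a = k then unit_vec (d a) i else 0\<^sub>v (d a))"
      unfolding ep_def p_def by (rule tt_unit[OF a k i])
    have tb: "tt b *\<^sub>v ep' = (if b = l then unit_vec (d b) j else 0\<^sub>v (d b))"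
      unfolding ep'_def p'_def by (rule tt_unit[OF _ l j]) (use b in auto)
    have Vc: "V a b \<in> carrier_mat (d a) (d b)" by (rule V_carrier)
    show "(tt a *\<^sub>v ep) \<bullet> (V a b *\<^sub>v (tt b *\<^sub>v ep')) = (if a = k then (if b = l then V k l $$ (i,j) else 0) else 0)"
    proof (cases "a = k")
      case False
      have "V a b *\<^sub>v (tt b *\<^sub>v ep') \<in> carrier_vec (d a)" by (intro carrier_vecI) (use Vc in simp)
      then show ?thesis unfolding ta using False by simp
    next
      case True
      show ?thesis
      proof (cases "b = l")
        case True
        then show ?thesis unfolding ta tb using \<open>a = k\<close> i j Vc
          by (simp add: comm_scalar_prod[of _ "d k"] scalar_prod_right_unit)
      next
        case False
        have "V a b *\<^sub>v 0\<^sub>v (d b) = 0\<^sub>v (d a)" using mv_zero[of "V a b"] Vc by simp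
        then show ?thesis unfolding ta tb using False \<open>a = k\<close> Vc i by simp
      qed
    qed
  qed
  also have "\<dots> = (\<Sum>a\<in>{1..K}. if a = k then (\<Sum>b\<in>{1..K}-{a}. if b = l then V k l $$ (i,j) else 0) else 0)"
    by (intro sum.cong refl) auto
  also have "\<dots> = (\<Sum>b\<in>{1..K}-{k}. if b = l then V k l $$ (i,j) else 0)" using k by simp
  also have "\<dots> = V k l $$ (i,j)" using l kl by simp
  finally show ?thesis unfolding p_def p'_def .
qed

lemma all_zero_imp:
  assumes z: "\<forall>r. eigenvalue TT r \<longrightarrow> r = 0"
  shows "\<forall>k\<in>{1..K}. \<forall>l\<in>{1..K}. k \<noteq> l \<longrightarrow> V k l = 0\<^sub>m (d k) (d l)"
proof (intro ballI impI)
  fix k l assume k: "k \<in> {1..K}" and l: "l \<in> {1..K}" and kl: "k \<noteq> l"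
  have T0: "TT = 0\<^sub>m q q" by (rule sym_all_eig_zero[OF T_carrier T_T z])
  note Sc = S_facts(1)
  have "Psi = (Phi * SS * SS) * Psi * (SS * SS * Phi)"
    unfolding PhiSS S_facts(3) using Psi_carrier by simp
  also have "\<dots> = Phi * SS * TT * SS * Phi"
    unfolding T_def' using Sc Psi_carrier Phi_carrier by (simp add: assoc_mult_mat[of _ q q _ q _ q])
  also have "\<dots> = 0\<^sub>m q q" unfolding T0 using Sc Phi_carrier by simp
  finally have Psi0: "Psi = 0\<^sub>m q q" .
  show "V k l = 0\<^sub>m (d k) (d l)"
  proof (rule eq_matI)
    fix i j assume "i < dim_row (0\<^sub>m (d k) (d l) :: real mat)" "j < dim_col (0\<^sub>m (d k) (d l) :: real mat)"
    hence i: "i < d k" and j: "j < d l" by auto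
    have "V k l $$ (i,j) = Psi $$ (blk_offset d k + i, blk_offset d l + j)"
      by (rule Psi_entry[symmetric, OF k l kl i j])
    also have "\<dots> = 0" unfolding Psi0 using blk_bound[of _ K _ d, OF k i] blk_bound[of _ K _ d, OF l j] by simp
    finally show "V k l $$ (i,j) = 0\<^sub>m (d k) (d l) $$ (i,j)" using i j by simp
  qed (use V_carrier in auto)
qed

lemma zero_imp_all:
  assumes z: "\<forall>k\<in>{1..K}. \<forall>l\<in>{1..K}. k \<noteq> l \<longrightarrow> V k l = 0\<^sub>m (d k) (d l)"
  shows "\<forall>r. eigenvalue TT r \<longrightarrow> r = 0"
proof (intro allI impI)
  fix r assume ev: "eigenvalue TT r"
  have F0: "(tt a)\<^sup>T * V a b * tt b = 0\<^sub>m q q" if "a \<in> {1..K}" "b \<in> {1..K} - {a}" for a b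
    using z that tau_carrier[of d K a] tau_carrier[of d K b] by auto
  have "Psi = msum q q (\<lambda>a. msum q q (\<lambda>b. 0\<^sub>m q q) ({1..K} - {a})) {1..K}"
    unfolding Psi_op_def by (intro msum_cong) (auto simp: F0)
  also have "\<dots> = 0\<^sub>m q q" unfolding msum_def by (intro eq_matI) auto
  finally have Psi0: "Psi = 0\<^sub>m q q" .
  have T0: "TT = 0\<^sub>m q q" unfolding T_def' Psi0 using S_facts(1) by simp
  obtain v where v: "v \<in> carrier_vec q" "v \<noteq> 0\<^sub>v q" "TT *\<^sub>v v = r \<cdot>\<^sub>v v"
    using ev T_carrier unfolding eigenvalue_def eigenvector_def by auto
  obtain p where p: "p < q" "v $ p \<noteq> 0" using v by (metis eq_vecI carrier_vecD index_zero_vec)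
  have "(TT *\<^sub>v v) $ p = 0" unfolding T0 using p v by simp
  hence "r * v $ p = 0" using v(3) p v by (metis carrier_vecD index_smult_vec(1))
  thus "r = 0" using p by simp
qed

end

theorem theorem2p2:
  fixes M :: "'a measure" and X :: "nat \<Rightarrow> 'a \<Rightarrow> nat \<Rightarrow> real"
    and d :: "nat \<Rightarrow> nat" and K :: nat
  assumes "prob_space M"
    and "K \<ge> 2"
    and meas: "\<And>k i. k \<in> {1..K} \<Longrightarrow> i < d k \<Longrightarrow> (\<lambda>\<omega>. X k \<omega> i) \<in> borel_measurable M"
    and sq: "\<And>k. k \<in> {1..K} \<Longrightarrow> integrable M (\<lambda>\<omega>. \<Sum>i<d k. (X k \<omega> i)\<^sup>2)"
    and centered: "\<And>k i. k \<in> {1..K} \<Longrightarrow> i < d k \<Longrightarrow> prob_space.expectation M (\<lambda>\<omega>. X k \<omega> i) = 0"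
    and inv: "\<And>k. k \<in> {1..K} \<Longrightarrow> invertible_mat (covop M X d k k)"
  shows "(\<forall>\<rho>. eigenvalue (T_op M X d K) \<rho> \<longrightarrow> -1 \<le> \<rho> \<and> \<rho> \<le> real K * (real K - 1))
    \<and> ((\<forall>\<rho>. eigenvalue (T_op M X d K) \<rho> \<longrightarrow> \<rho> = 0) \<longleftrightarrow>
         (\<forall>k\<in>{1..K}. \<forall>l\<in>{1..K}. k \<noteq> l \<longrightarrow> covop M X d k l = 0\<^sub>m (d k) (d l)))"
  proof -
  have C: "cca M X d K" by (rule cca.intro) (use assms in auto)
  show ?thesis using cca.eig_bounds[OF C] cca.all_zero_imp[OF C] cca.zero_imp_all[OF C] by blast
qed

end
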